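(* Consider the ride-hailing model in the context with $L=2$ regions and driving cost rate $c=0$. For every such two-region network (arbitrary demand rates, trip times, $R\in(0,1)$, $M\ge0$, $N>0$) and every AV-first strategy $\hat{\bm x}^A$, the AV-first profit $\sum_{i,\alpha}r^A_{i\alpha}\hat x^A_{i\alpha}+\pi(\hat{\bm b}^C)$ is at least $\tfrac45$ times the optimal value of $\mathcal{OPT}$, i.e. the performance loss $1-(\text{AV-first profit})/(\text{optimal value})$ is at most $20\%$; and $20\%$ is the maximum (supremum) performance loss over all such networks.
   Context: Model. There are $L$ regions $\{1,\dots,L\}$. For regions $i,j$, $b_{ij}\ge0$ is the customer rate from $i$ to $j$; $b_i=\sum_j b_{ij}$ (assumed $>0$), $q_{ij}=b_{ij}/b_i$. $t_{ij}\ge0$ is the trip time of a customer trip from $i$ to $j$ (with $t_{ij}>0$ for $i\ne j$); the empty repositioning time from $i$ to $\alpha$ is $t_{i\alpha}$ for $\alpha\ne i$ and $0$ for $\alpha=i$. Constants: $p>0$, $c\ge0$, $R\in(0,1)$, CV fleet mass $N>0$, AV fleet mass $M\ge0$. For $i,\alpha$: $\tau^{dr}_{i\alpha}=\mathbf 1[\alpha\ne i]\,t_{i\alpha}+\sum_j q_{\alpha j}t_{\alpha j}$, $r^A_{i\alpha}=p\sum_j q_{\alpha j}t_{\alpha j}-c\tau^{dr}_{i\alpha}$, $r^C_{i\alpha}=p(1-R)\sum_j q_{\alpha j}t_{\alpha j}-c\tau^{dr}_{i\alpha}$, $r^{C2P}_{i\alpha}=pR\sum_j q_{\alpha j}t_{\alpha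 j}$. A matrix $\bm x\in\mathbb R^{L\times L}_{\ge0}$ satisfies flow balance if $\sum_j(\sum_k x_{kj})q_{ji}=\sum_\alpha x_{i\alpha}$ for all $i$. $\mathcal{CV}(\bm b^C)$: maximize $N\log\sum_{i,\alpha}r^C_{i\alpha}x_{i\alpha}-\sum_{i,\alpha}\tau^{dr}_{i\alpha}x_{i\alpha}$ over $\bm x\ge0$ satisfying flow balance and $\sum_j x_{ji}\le b^C_i$ for all $i$; $\pi(\bm b^C)=\sum_{i,\alpha}r^{C2P}_{i\alpha}x_{i\alpha}$ for an optimal solution $\bm x$ (same for all optimal solutions). $\mathcal{OPT}$: maximize $\sum_{i,\alpha}r^A_{i\alpha}x^A_{i\alpha}+\pi(\bm b^C)$ over $\bm b^C\in\mathbb R^L_{\ge0}$, $\bm x^A\in\mathbb R^{L\times L}_{\ge0}$ subject to $\sum_j x^A_{ji}+b^C_i\le b_i$ for all $i$, flow balance for $\bm x^A$, and $\sum_{i,\alpha}\tau^{dr}_{i\alpha}x^A_{i\alpha}\le M$. AV-first policy: an AV-first strategy $\hat{\bm x}^A$ maximizes $\sum_{i,\alpha}r^A_{i\alpha}x^A_{i\alpha}$ over $\bm x^A\ge0$ with $\sum_j x^A_{ji}\le b_i$ for all $i$, flow balance, and $\sum_{i,\alpha}\tau^{dr}_{i\alpha}x^A_{i\alpha}\le M$; the residual demand $\hat b^C_i=b_i-\sum_j\hat x^A_{ji}$ is revealed to CVs, and the AV-first profit is $\sum_{i,\alpha}r^A_{i\alpha}\hat x^A_{i\alpha}+\pi(\hat{\bm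 b}^C)$. *)

theory Defs
  imports Complex_Main "HOL-Library.Extended_Real"
begin

text \<open>Matrices are functions nat => nat => real;
only their values on regions matter. Parameters: b (customer rates), t (trip times),
p, c, R, N (CV fleet mass), M (AV fleet mass).\<close>

definition regs :: "nat \<Rightarrow> nat set" where
  "regs L = {0..<L}"

definition brow :: "nat \<Rightarrow> (nat \<Rightarrow> nat \<Rightarrow> real) \<Rightarrow> nat \<Rightarrow> real" where
  "brow L b i = (\<Sum>j\<in>regs L. b i j)"

definition qq :: "nat \<Rightarrow> (nat \<Rightarrow> nat \<Rightarrow> real) \<Rightarrow> nat \<Rightarrow> nat \<Rightarrow> real" where
  "qq L b i j = b i j / brow L b i"

definition meantrip :: "nat \<Rightarrow> (nat \<Rightarrow> nat \<Rightarrow> real) \<Rightarrow> (nat \<Rightarrow> nat \<Rightarrow> real) \<Rightarrow> nat \<Rightarrow> real" where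
  "meantrip L b t a = (\<Sum>j\<in>regs L. qq L b a j * t a j)"

definition tau_dr :: "nat \<Rightarrow> (nat \<Rightarrow> nat \<Rightarrow> real) \<Rightarrow> (nat \<Rightarrow> nat \<Rightarrow> real) \<Rightarrow> nat \<Rightarrow> nat \<Rightarrow> real" where
  "tau_dr L b t i a = (if a \<noteq> i then t i a else 0) + meantrip L b t a"

definition rA :: "nat \<Rightarrow> (nat \<Rightarrow> nat \<Rightarrow> real) \<Rightarrow> (nat \<Rightarrow> nat \<Rightarrow> real) \<Rightarrow> real \<Rightarrow> real \<Rightarrow> nat \<Rightarrow> nat \<Rightarrow> real" where
  "rA L b t p c i a = p * meantrip L b t a - c * tau_dr L b t i a"

definition rC :: "nat \<Rightarrow> (nat \<Rightarrow> nat \<Rightarrow> real) \<Rightarrow> (nat \<Rightarrow> nat \<Rightarrow> real) \<Rightarrow> real \<Rightarrow> real \<Rightarrow> real \<Rightarrow> nat \<Rightarrow> nat \<Rightarrow> real" where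
  "rC L b t p c R i a = p * (1 - R) * meantrip L b t a - c * tau_dr L b t i a"

definition rC2P :: "nat \<Rightarrow> (nat \<Rightarrow> nat \<Rightarrow> real) \<Rightarrow> (nat \<Rightarrow> nat \<Rightarrow> real) \<Rightarrow> real \<Rightarrow> real \<Rightarrow> nat \<Rightarrow> nat \<Rightarrow> real" where
  "rC2P L b t p R i a = p * R * meantrip L b t a"

definition wsum :: "nat \<Rightarrow> (nat \<Rightarrow> nat \<Rightarrow> real) \<Rightarrow> (nat \<Rightarrow> nat \<Rightarrow> real) \<Rightarrow> real" where
  "wsum L r x = (\<Sum>i\<in>regs L. \<Sum>a\<in>regs L. r i a * x i a)"

definition nonneg :: "nat \<Rightarrow> (nat \<Rightarrow> nat \<Rightarrow> real) \<Rightarrow> bool" where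
  "nonneg L x \<longleftrightarrow> (\<forall>i\<in>regs L. \<forall>a\<in>regs L. 0 \<le> x i a)"

definition flow_balance :: "nat \<Rightarrow> (nat \<Rightarrow> nat \<Rightarrow> real) \<Rightarrow> (nat \<Rightarrow> nat \<Rightarrow> real) \<Rightarrow> bool" where
  "flow_balance L b x \<longleftrightarrow>
     (\<forall>i\<in>regs L. (\<Sum>j\<in>regs L. (\<Sum>k\<in>regs L. x k j) * qq L b j i) = (\<Sum>a\<in>regs L. x i a))"

definition valid_network ::
  "nat \<Rightarrow> (nat \<Rightarrow> nat \<Rightarrow> real) \<Rightarrow> (nat \<Rightarrow> nat \<Rightarrow> real) \<Rightarrow> real \<Rightarrow> real \<Rightarrow> real \<Rightarrow> real \<Rightarrow> real \<Rightarrow> bool" where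
  "valid_network L b t p c R N M \<longleftrightarrow>
     (\<forall>i\<in>regs L. \<forall>j\<in>regs L. 0 \<le> b i j) \<and> (\<forall>i\<in>regs L. 0 < brow L b i) \<and>
     (\<forall>i\<in>regs L. \<forall>j\<in>regs L. 0 \<le> t i j) \<and> (\<forall>i\<in>regs L. \<forall>j\<in>regs L. i \<noteq> j \<longrightarrow> 0 < t i j) \<and>
     0 < p \<and> 0 \<le> c \<and> 0 < R \<and> R < 1 \<and> 0 < N \<and> 0 \<le> M"

definition cv_feasible :: "nat \<Rightarrow> (nat \<Rightarrow> nat \<Rightarrow> real) \<Rightarrow> (nat \<Rightarrow> real) \<Rightarrow> (nat \<Rightarrow> nat \<Rightarrow> real) \<Rightarrow> bool" where
  "cv_feasible L b bC x \<longleftrightarrow> nonneg L x \<and> flow_balance L b x \<and>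
     (\<forall>i\<in>regs L. (\<Sum>j\<in>regs L. x j i) \<le> bC i)"

definition cv_obj ::
  "nat \<Rightarrow> (nat \<Rightarrow> nat \<Rightarrow> real) \<Rightarrow> (nat \<Rightarrow> nat \<Rightarrow> real) \<Rightarrow> real \<Rightarrow> real \<Rightarrow> real \<Rightarrow> real \<Rightarrow> (nat \<Rightarrow> nat \<Rightarrow> real) \<Rightarrow> ereal" where
  "cv_obj L b t p c R N x =
     (if 0 < wsum L (rC L b t p c R) x
      then ereal (N * ln (wsum L (rC L b t p c R) x) - wsum L (tau_dr L b t) x)
      else -\<infinity>)"

definition cv_optimal ::
  "nat \<Rightarrow> (nat \<Rightarrow> nat \<Rightarrow> real) \<Rightarrow> (nat \<Rightarrow> nat \<Rightarrow> real) \<Rightarrow> real \<Rightarrow> real \<Rightarrow> real \<Rightarrow> real \<Rightarrow> (nat \<Rightarrow> real) \<Rightarrow> (nat \<Rightarrow> nat \<Rightarrow> real) \<Rightarrow> bool" where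
  "cv_optimal L b t p c R N bC x \<longleftrightarrow> cv_feasible L b bC x \<and>
     (\<forall>y. cv_feasible L b bC y \<longrightarrow> cv_obj L b t p c R N y \<le> cv_obj L b t p c R N x)"

text \<open>pi(b^C): platform revenue from CVs at an optimal solution (the same for all optimal solutions).\<close>
definition cv_pi ::
  "nat \<Rightarrow> (nat \<Rightarrow> nat \<Rightarrow> real) \<Rightarrow> (nat \<Rightarrow> nat \<Rightarrow> real) \<Rightarrow> real \<Rightarrow> real \<Rightarrow> real \<Rightarrow> real \<Rightarrow> (nat \<Rightarrow> real) \<Rightarrow> real" where
  "cv_pi L b t p c R N bC =
     (SOME v. \<exists>x. cv_optimal L b t p c R N bC x \<and> v = wsum L (rC2P L b t p R) x)"

definition opt_feasible ::
  "nat \<Rightarrow> (nat \<Rightarrow> nat \<Rightarrow> real) \<Rightarrow> (nat \<Rightarrow> nat \<Rightarrow> real) \<Rightarrow> real \<Rightarrow> (nat \<Rightarrow> real) \<Rightarrow> (nat \<Rightarrow> nat \<Rightarrow> real) \<Rightarrow> bool" where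
  "opt_feasible L b t M bC xA \<longleftrightarrow>
     (\<forall>i\<in>regs L. 0 \<le> bC i) \<and> nonneg L xA \<and>
     (\<forall>i\<in>regs L. (\<Sum>j\<in>regs L. xA j i) + bC i \<le> brow L b i) \<and>
     flow_balance L b xA \<and> wsum L (tau_dr L b t) xA \<le> M"

definition opt_value ::
  "nat \<Rightarrow> (nat \<Rightarrow> nat \<Rightarrow> real) \<Rightarrow> (nat \<Rightarrow> nat \<Rightarrow> real) \<Rightarrow> real \<Rightarrow> real \<Rightarrow> real \<Rightarrow> real \<Rightarrow> real \<Rightarrow> real" where
  "opt_value L b t p c R N M =
     Sup {wsum L (rA L b t p c) xA + cv_pi L b t p c R N bC | bC xA. opt_feasible L b t M bC xA}"

definition av_feasible ::
  "nat \<Rightarrow> (nat \<Rightarrow> nat \<Rightarrow> real) \<Rightarrow> (nat \<Rightarrow> nat \<Rightarrow> real) \<Rightarrow> real \<Rightarrow> (nat \<Rightarrow> nat \<Rightarrow> real) \<Rightarrow> bool" where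
  "av_feasible L b t M x \<longleftrightarrow> nonneg L x \<and>
     (\<forall>i\<in>regs L. (\<Sum>j\<in>regs L. x j i) \<le> brow L b i) \<and>
     flow_balance L b x \<and> wsum L (tau_dr L b t) x \<le> M"

definition av_first ::
  "nat \<Rightarrow> (nat \<Rightarrow> nat \<Rightarrow> real) \<Rightarrow> (nat \<Rightarrow> nat \<Rightarrow> real) \<Rightarrow> real \<Rightarrow> real \<Rightarrow> real \<Rightarrow> (nat \<Rightarrow> nat \<Rightarrow> real) \<Rightarrow> bool" where
  "av_first L b t p c M x \<longleftrightarrow> av_feasible L b t M x \<and>
     (\<forall>y. av_feasible L b t M y \<longrightarrow> wsum L (rA L b t p c) y \<le> wsum L (rA L b t p c) x)"

definition avfirst_profit ::
  "nat \<Rightarrow> (nat \<Rightarrow> nat \<Rightarrow> real) \<Rightarrow> (nat \<Rightarrow> nat \<Rightarrow> real) \<Rightarrow> real \<Rightarrow> real \<Rightarrow> real \<Rightarrow> real \<Rightarrow> (nat \<Rightarrow> nat \<Rightarrow> real) \<Rightarrow> real" where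
  "avfirst_profit L b t p c R N x =
     wsum L (rA L b t p c) x + cv_pi L b t p c R N (\<lambda>i. brow L b i - (\<Sum>j\<in>regs L. x j i))"

end

theory Submission
  imports Defs "HOL-Analysis.Analysis"
begin


definition Wf :: "real \<Rightarrow> real \<Rightarrow> real \<Rightarrow> real \<Rightarrow> real" where
  "Wf m0 m1 s r = m0* s + m1*r"
definition Phf :: "real \<Rightarrow> real \<Rightarrow> real \<Rightarrow> real \<Rightarrow> real \<Rightarrow> real \<Rightarrow> real" where
  "Phf al be t1 t2 s r = t1 * max 0 (al* s - be*r) + t2 * max 0 (be*r - al* s)"
definition Fv where
  "Fv m0 m1 al be t1 t2 N g s r = N * ln (g * Wf m0 m1 s r) - Wf m0 m1 s r - Phf al be t1 t2 s r"
definition cvopt where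
  "cvopt m0 m1 al be t1 t2 N g c0 c1 s r \<longleftrightarrow> 0 \<le> s \<and> s \<le> c0 \<and> 0 \<le> r \<and> r \<le> c1 \<and>
     (\<forall>s' r'. 0 \<le> s' \<longrightarrow> s' \<le> c0 \<longrightarrow> 0 \<le> r' \<longrightarrow> r' \<le> c1 \<longrightarrow> 0 < Wf m0 m1 s' r' \<longrightarrow>
        0 < Wf m0 m1 s r \<and> Fv m0 m1 al be t1 t2 N g s' r' \<le> Fv m0 m1 al be t1 t2 N g s r)"

lemma cvopt_pos:
  assumes "cvopt m0 m1 al be t1 t2 N g c0 c1 s r" "0 \<le> s'" "s' \<le> c0" "0 \<le> r'" "r' \<le> c1"
    "0 < Wf m0 m1 s' r'"
  shows "0 < Wf m0 m1 s r"
  using assms unfolding cvopt_def by blast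

lemma max0_convex:
  fixes a b th :: real
  assumes "0 \<le> th" "th \<le> 1"
  shows "max 0 ((1-th)*a + th*b) \<le> (1-th) * max 0 a + th * max 0 b"
proof -
  have "(1-th)*a \<le> (1-th) * max 0 a" using assms by (intro mult_left_mono) auto
  moreover have "th*b \<le> th * max 0 b" using assms by (intro mult_left_mono) auto
  moreover have "0 \<le> (1-th) * max 0 a" "0 \<le> th * max 0 b" using assms by auto
  ultimately show ?thesis by linarith
qed

lemma Phf_convex:
  assumes "0 \<le> th" "th \<le> 1" "0 \<le> t1" "0 \<le> t2"
  shows "Phf al be t1 t2 (s + th*(s'-s)) (r + th*(r'-r)) \<le> (1-th)*Phf al be t1 t2 s r + th*Phf al be t1 t2 s' r'"
proof -
  have e1: "al*(s + th*(s'-s)) - be*(r + th*(r'-r)) = (1-th)*(al* s-be*r) + th*(al* s'-be*r')"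
    by (simp add: algebra_simps)
  have e2: "be*(r + th*(r'-r)) - al*(s + th*(s'-s)) = (1-th)*(be*r-al* s) + th*(be*r'-al* s')"
    by (simp add: algebra_simps)
  have "t1 * max 0 ((1-th)*(al* s-be*r) + th*(al* s'-be*r')) \<le> t1 * ((1-th) * max 0 (al* s-be*r) + th * max 0 (al* s'-be*r'))"
    using assms by (intro mult_left_mono max0_convex) auto
  moreover have "t2 * max 0 ((1-th)*(be*r-al* s) + th*(be*r'-al* s')) \<le> t2 * ((1-th) * max 0 (be*r-al* s) + th * max 0 (be*r'-al* s'))"
    using assms by (intro mult_left_mono max0_convex) auto
  ultimately show ?thesis unfolding Phf_def e1 e2 by (simp add: algebra_simps)
qed

lemma ln_ge_one_minus_inv:
  fixes x :: real assumes "0 < x" shows "1 - 1/x \<le> ln x"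
proof -
  have "ln (1/x) \<le> 1/x - 1" using assms by (intro ln_le_minus_one) auto
  moreover have "ln (1/x) = - ln x" using assms by (simp add: ln_div)
  ultimately show ?thesis by linarith
qed

lemma foc:
  assumes m: "0 \<le> m0" "0 \<le> m1" and t: "0 \<le> t1" "0 \<le> t2" and g: "0 < g"
    and opt: "cvopt m0 m1 al be t1 t2 N g c0 c1 s r"
    and w: "0 \<le> s'" "s' \<le> c0" "0 \<le> r'" "r' \<le> c1"
    and Cpos: "0 < Wf m0 m1 s r" and N0: "0 \<le> N"
  shows "(N - Wf m0 m1 s r) * (Wf m0 m1 s' r' - Wf m0 m1 s r) \<le>
         Wf m0 m1 s r * (Phf al be t1 t2 s' r' - Phf al be t1 t2 s r)"
proof -
  define C where "C = Wf m0 m1 s r"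
  define W' where "W' = Wf m0 m1 s' r'"
  define P where "P = Phf al be t1 t2 s r"
  define P' where "P' = Phf al be t1 t2 s' r'"
  define D where "D = W' - C"
  have box: "0 \<le> s" "s \<le> c0" "0 \<le> r" "r \<le> c1" using opt unfolding cvopt_def by auto
  have W'nn: "0 \<le> W'" unfolding W'_def Wf_def using m w by auto
  have key: "N*D/(C + th*D) \<le> D + P' - P" if th: "0 < th" "th < 1" for th
  proof -
    define sa where "sa = s + th*(s'-s)"
    define ra where "ra = r + th*(r'-r)"
    have sa: "0 \<le> sa" "sa \<le> c0"
    proof -
      have "sa = (1-th)* s + th* s'" unfolding sa_def by (simp add: algebra_simps)
      moreover have "0 \<le> (1-th)* s" "0 \<le> th* s'" using th box w by auto
      moreover have "(1-th)* s \<le> (1-th)*c0" "th* s' \<le> th*c0" using th box w by (auto intro: mult_left_mono)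
      ultimately show "0 \<le> sa" "sa \<le> c0" by (auto simp: algebra_simps)
    qed
    have ra: "0 \<le> ra" "ra \<le> c1"
    proof -
      have "ra = (1-th)*r + th*r'" unfolding ra_def by (simp add: algebra_simps)
      moreover have "0 \<le> (1-th)*r" "0 \<le> th*r'" using th box w by auto
      moreover have "(1-th)*r \<le> (1-th)*c1" "th*r' \<le> th*c1" using th box w by (auto intro: mult_left_mono)
      ultimately show "0 \<le> ra" "ra \<le> c1" by (auto simp: algebra_simps)
    qed
    have Wa: "Wf m0 m1 sa ra = C + th*D" unfolding sa_def ra_def C_def D_def W'_def Wf_def
      by (simp add: algebra_simps)
    have CthD: "C + th*D = (1-th)*C + th*W'" unfolding D_def by (simp add: algebra_simps)
    have Wapos: "0 < C + th*D"
    proof -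
      have "0 < (1-th)*C" using th Cpos C_def by auto
      moreover have "0 \<le> th*W'" using th W'nn by auto
      ultimately show ?thesis using CthD by linarith
    qed
    have "Fv m0 m1 al be t1 t2 N g sa ra \<le> Fv m0 m1 al be t1 t2 N g s r"
      using opt sa ra Wapos Wa unfolding cvopt_def by auto
    hence F: "N * ln (g*(C+th*D)) - (C+th*D) - Phf al be t1 t2 sa ra \<le> N * ln (g*C) - C - P"
      unfolding Fv_def Wa by (simp add: C_def P_def)
    have Pa: "Phf al be t1 t2 sa ra \<le> (1-th)*P + th*P'"
      unfolding sa_def ra_def P_def P'_def using th t by (intro Phf_convex) auto
    have lnd: "ln (g*(C+th*D)) - ln (g*C) = ln ((C+th*D)/C)"
      using g Wapos Cpos C_def by (simp add: ln_div ln_mult)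
    have "1 - 1/((C+th*D)/C) \<le> ln ((C+th*D)/C)"
      using Wapos Cpos C_def by (intro ln_ge_one_minus_inv) auto
    moreover have "1 - 1/((C+th*D)/C) = th*D/(C+th*D)"
      using Wapos Cpos C_def by (simp add: field_simps)
    ultimately have l: "th*D/(C+th*D) \<le> ln (g*(C+th*D)) - ln (g*C)" using lnd by linarith
    have "N*(th*D/(C+th*D)) \<le> N*(ln (g*(C+th*D)) - ln (g*C))"
      using l N0 by (intro mult_left_mono) auto
    also have "\<dots> \<le> th*D + th*(P' - P)" using F Pa by (simp add: algebra_simps)
    finally have "th*(N*D/(C+th*D)) \<le> th*(D + P' - P)" by (simp add: algebra_simps)
    thus ?thesis using th by (metis mult_le_cancel_left_pos)
  qed
  have lim: "((\<lambda>th. N*D/(C + th*D)) \<longlongrightarrow> N*D/(C + 0*D)) (at_right 0)"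
    using Cpos C_def by (intro tendsto_intros) auto
  have ev: "eventually (\<lambda>th. N*D/(C + th*D) \<le> D + P' - P) (at_right (0::real))"
    by (rule eventually_at_rightI[of 0 1]) (auto intro: key)
  have "N*D/C \<le> D + P' - P"
    using tendsto_upperbound[OF lim ev trivial_limit_at_right_real] by simp
  hence "N*D \<le> C*(D + P' - P)" using Cpos C_def by (simp add: field_simps)
  thus ?thesis unfolding C_def[symmetric] W'_def[symmetric] P_def[symmetric] P'_def[symmetric]
    using D_def by (simp add: algebra_simps)
qed

lemma claim_u:
  fixes u a c M N K T k :: real
  assumes u: "0 < u" "u < 1" and a1: "a \<le> M" and a2: "a \<le> u*M + (1-u)*k"
    and c1: "c \<le> N" and c2: "c \<le> K - k" and k: "0 \<le> k" and T1: "K \<le> T" and T2: "M + u*N \<le> T"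
    and c0: "0 \<le> c"
  shows "a + c \<le> 5/4*T"
proof (cases "K \<le> N")
  case True
  have s1: "a + c \<le> K + u*M - u*k" using a2 c2 by (simp add: algebra_simps)
  have "0 \<le> u*k" using u k by simp
  hence s2: "a + c \<le> K + u*M" using s1 by linarith
  have "u*K \<le> u*N" using True u by simp
  hence T3: "M + u*K \<le> T" using T2 by linarith
  show ?thesis
  proof (cases "4*u*M \<le> K")
    case True
    thus ?thesis using s2 T1 by linarith
  next
    case False
    have h1: "0 \<le> (5 - 4*u)*(4*u*M - K)" using False u by (intro mult_nonneg_nonneg) auto
    have K0: "0 \<le> K" using c0 c2 k by linarith
    have h2: "0 \<le> K*(2*u - 1)^2" using K0 by simp
    have eq: "4*u*(5*M + 5*u*K - 4*K - 4*u*M) = (5 - 4*u)*(4*u*M - K) + 5*(K*(2*u - 1)^2)"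
      by (simp add: algebra_simps power2_eq_square)
    have "0 \<le> 4*u*(5*M + 5*u*K - 4*K - 4*u*M)" using h1 h2 eq by linarith
    hence "0 \<le> 5*M + 5*u*K - 4*K - 4*u*M" using u by (simp add: zero_le_mult_iff)
    thus ?thesis using s2 T3 by linarith
  qed
next
  case False
  have s: "a + c \<le> (1-u)*K + u*M + u*N"
  proof (cases "K - N \<le> k")
    case True
    have "u*(K-N) \<le> u*k" using True u by simp
    thus ?thesis using a2 c2 by (simp add: algebra_simps)
  next
    case kl: False
    have "(1-u)*k \<le> (1-u)*(K-N)" using kl u by simp
    thus ?thesis using a2 c1 by (simp add: algebra_simps)
  qed
  have T0: "0 \<le> T" using False c0 c1 T1 by linarith
  have "u*(1-u)*N \<le> u*(1-u)*T" using False T1 u by (intro mult_left_mono) auto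
  moreover have "u*(1-u)*T \<le> 1/4*T"
  proof -
    have "1/4 - u*(1-u) = (u - 1/2)^2" by (simp add: algebra_simps power2_eq_square)
    hence "u*(1-u) \<le> 1/4" by (metis diff_ge_0_iff_ge zero_le_power2)
    thus ?thesis using T0 by (intro mult_right_mono) auto
  qed
  moreover have "u*(M + u*N) \<le> u*T" using T2 u by simp
  moreover have "(1-u)*K \<le> (1-u)*T" using T1 u by simp
  ultimately show ?thesis using s by (simp add: algebra_simps)
qed

definition avopt where
  "avopt m0 m1 al be t1 t2 B0 B1 M s r \<longleftrightarrow> 0 \<le> s \<and> s \<le> B0 \<and> 0 \<le> r \<and> r \<le> B1 \<and>
     Wf m0 m1 s r + Phf al be t1 t2 s r \<le> M \<and>
     (\<forall>s' r'. 0 \<le> s' \<longrightarrow> s' \<le> B0 \<longrightarrow> 0 \<le> r' \<longrightarrow> r' \<le> B1 \<longrightarrow>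
        Wf m0 m1 s' r' + Phf al be t1 t2 s' r' \<le> M \<longrightarrow> Wf m0 m1 s' r' \<le> Wf m0 m1 s r)"

lemma Phf_ge: "0 \<le> t1 \<Longrightarrow> 0 \<le> t2 \<Longrightarrow> t1 * max 0 (al* s - be*r) \<le> Phf al be t1 t2 s r"
  unfolding Phf_def by simp
lemma Phf_nn: "0 \<le> t1 \<Longrightarrow> 0 \<le> t2 \<Longrightarrow> 0 \<le> Phf al be t1 t2 s r"
  unfolding Phf_def by simp
lemma Phf_bal: "al* s = be*r \<Longrightarrow> Phf al be t1 t2 s r = 0"
  unfolding Phf_def by simp
lemma Phf_pos: "be*r \<le> al* s \<Longrightarrow> Phf al be t1 t2 s r = t1*(al* s - be*r)"
  unfolding Phf_def by simp
lemma Phf_zero: assumes "0 < t1" "0 < t2" "Phf al be t1 t2 s r \<le> 0" shows "al* s = be*r"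
proof -
  have "0 \<le> t1 * max 0 (al* s - be*r)" "0 \<le> t2 * max 0 (be*r - al* s)" using assms by auto
  hence "t1 * max 0 (al* s - be*r) = 0" "t2 * max 0 (be*r - al* s) = 0" using assms(3) unfolding Phf_def by linarith+
  hence "max 0 (al* s - be*r) = 0" "max 0 (be*r - al* s) = 0" using assms by auto
  thus ?thesis by linarith
qed
lemma Wf_nn: "0 \<le> m0 \<Longrightarrow> 0 \<le> m1 \<Longrightarrow> 0 \<le> s \<Longrightarrow> 0 \<le> r \<Longrightarrow> 0 \<le> Wf m0 m1 s r"
  unfolding Wf_def by simp
lemma Wf_id: "0 < al \<Longrightarrow> Wf m0 m1 s r = (m1 + m0/al*be)*r + m0/al*(al* s - be*r)"
  unfolding Wf_def by (simp add: field_simps)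
lemma Wf_le: assumes "0 < al" "0 \<le> m0" shows "Wf m0 m1 s r \<le> (m1 + m0/al*be)*r + m0/al*max 0 (al* s - be*r)"
proof -
  have "m0/al*(al* s - be*r) \<le> m0/al*max 0 (al* s - be*r)" using assms by (intro mult_left_mono) auto
  thus ?thesis using Wf_id[OF assms(1), of m0 m1 s r be] by linarith
qed
lemma Wf_diff: "Wf m0 m1 (a - b) (c - d) = Wf m0 m1 a c - Wf m0 m1 b d"
  unfolding Wf_def by (simp add: algebra_simps)

lemma lin_bound:
  fixes h t1 a M k X :: real
  assumes "0 < h" "0 < t1" "a \<le> k + h*X" "a + t1*X \<le> M"
  shows "(h+t1)*a \<le> h*M + t1*k"
proof -
  have "h*(a + t1*X) \<le> h*M" using assms by (intro mult_left_mono) auto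
  moreover have "t1*a \<le> t1*(k + h*X)" using assms by (intro mult_left_mono) auto
  ultimately show ?thesis by (simp add: algebra_simps)
qed

lemma core_total:
  fixes m0 m1 al be t1 t2 B0 B1 M N g :: real
  assumes m0: "0 < m0" and m1: "0 \<le> m1" and al: "0 < al" and be: "0 \<le> be"
    and t1: "0 < t1" and t2: "0 < t2" and N: "0 < N" and g: "0 < g"
    and B: "0 \<le> B0" "0 \<le> B1" and orient: "be*B1 \<le> al*B0" and M0: "0 \<le> M"
    and av: "avopt m0 m1 al be t1 t2 B0 B1 M sh rh"
    and cvr: "cvopt m0 m1 al be t1 t2 N g (B0 - sh) (B1 - rh) sz rz"
    and ya: "0 \<le> sa" "0 \<le> ra" "Wf m0 m1 sa ra + Phf al be t1 t2 sa ra \<le> M"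
    and bc: "0 \<le> c0" "0 \<le> c1" "sa + c0 \<le> B0" "ra + c1 \<le> B1"
    and cvo: "cvopt m0 m1 al be t1 t2 N g c0 c1 sc rc"
  shows "Wf m0 m1 sa ra + Wf m0 m1 sc rc \<le> 5/4 * (Wf m0 m1 sh rh + Wf m0 m1 sz rz)"
proof -
  define W where "W = Wf m0 m1"
  define Ph where "Ph = Phf al be t1 t2"
  define h where "h = m0/al"
  define kap where "kap = m1 + h*be"
  define K where "K = kap*B1"
  define E where "E = al*B0 - be*B1"
  define U where "U = h*E"
  define A where "A = W sh rh"
  define C where "C = W sz rz"
  define a where "a = W sa ra"
  define c where "c = W sc rc"
  define T where "T = A + C"
  define V where "V = K + U - A"
  have hpos: "0 < h" unfolding h_def using m0 al by simp
  have kap0: "0 \<le> kap" unfolding kap_def using hpos m1 be by simp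
  have E0: "0 \<le> E" unfolding E_def using orient by simp
  have hal: "h*al = m0" unfolding h_def using al by simp
  have WB: "W B0 B1 = K + U" unfolding W_def Wf_def K_def U_def kap_def E_def
    using hal by (simp add: algebra_simps)
  have Wid: "W s r = kap*r + h*(al* s - be*r)" for s r
    unfolding W_def kap_def h_def using Wf_id[OF al] by simp
  have Wle: "W s r \<le> kap*r + h*max 0 (al* s - be*r)" for s r
    unfolding W_def kap_def h_def using Wf_le[OF al] m0 by simp
  have Phge: "t1 * max 0 (al* s - be*r) \<le> Ph s r" for s r
    unfolding Ph_def using Phf_ge t1 t2 by simp
  have Phnn: "0 \<le> Ph s r" for s r unfolding Ph_def using Phf_nn t1 t2 by simp
  have Wnn: "0 \<le> s \<Longrightarrow> 0 \<le> r \<Longrightarrow> 0 \<le> W s r" for s r unfolding W_def using Wf_nn m0 m1 by simp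
  have avb: "0 \<le> sh" "sh \<le> B0" "0 \<le> rh" "rh \<le> B1" "A + Ph sh rh \<le> M"
    using av unfolding avopt_def A_def W_def Ph_def by auto
  have avo: "\<And>s r. 0 \<le> s \<Longrightarrow> s \<le> B0 \<Longrightarrow> 0 \<le> r \<Longrightarrow> r \<le> B1 \<Longrightarrow> W s r + Ph s r \<le> M \<Longrightarrow> W s r \<le> A"
    using av unfolding avopt_def A_def W_def Ph_def by auto
  have zb: "0 \<le> sz" "sz \<le> B0 - sh" "0 \<le> rz" "rz \<le> B1 - rh" using cvr unfolding cvopt_def by auto
  have cb: "0 \<le> sc" "sc \<le> c0" "0 \<le> rc" "rc \<le> c1" using cvo unfolding cvopt_def by auto
  have A0: "0 \<le> A" unfolding A_def using Wnn avb by simp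
  have C0: "0 \<le> C" unfolding C_def using Wnn zb by simp
  have a0: "0 \<le> a" unfolding a_def using Wnn ya by simp
  have c0': "0 \<le> c" unfolding c_def using Wnn cb by simp
  have T0: "0 \<le> T" unfolding T_def using A0 C0 by simp
  have T54: "T \<le> 5/4*T" using T0 by simp
  have aA: "a \<le> A" unfolding a_def using avo ya bc by (simp add: W_def Ph_def)
  have aM: "a \<le> M" using ya Phnn[of sa ra] unfolding a_def W_def Ph_def by linarith
  have sumB: "a + c \<le> K + U"
  proof -
    have "m0*(sa+sc) \<le> m0*B0" using m0 ya bc cb by (intro mult_left_mono) auto
    moreover have "m1*(ra+rc) \<le> m1*B1" using m1 ya bc cb by (intro mult_left_mono) auto
    ultimately show ?thesis using WB unfolding a_def c_def W_def Wf_def by (simp add: algebra_simps)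
  qed
  have cN: "c \<le> N"
  proof (cases "c = 0")
    case True thus ?thesis using N by simp
  next
    case False
    hence cp: "0 < c" using c0' by simp
    have "(N - c)*(W 0 0 - c) \<le> c*(Ph 0 0 - Ph sc rc)"
      using foc[OF _ _ _ _ g cvo, of 0 0] m0 m1 t1 t2 N cp bc
      unfolding W_def Ph_def c_def by auto
    moreover have "W 0 0 = 0" "Ph 0 0 = 0" unfolding W_def Wf_def Ph_def Phf_def by auto
    ultimately have "(N - c)*c \<ge> c * Ph sc rc" by (simp add: algebra_simps)
    hence "(N - c)*c \<ge> 0" using Phnn[of sc rc] cp by (meson mult_nonneg_nonneg less_imp_le order_trans)
    thus ?thesis using cp by (simp add: zero_le_mult_iff)
  qed
  have cu: "c*(h+t1) \<le> h*N" if D: "be*rc < al* sc"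
  proof (cases "c = 0")
    case True thus ?thesis using hpos N by simp
  next
    case False
    hence cp: "0 < c" using c0' by simp
    define s' where "s' = be*rc/al"
    have s': "0 \<le> s'" "s' \<le> c0"
    proof -
      show "0 \<le> s'" unfolding s'_def using be cb al by simp
      have "s' \<le> sc" unfolding s'_def using D al by (simp add: field_simps)
      thus "s' \<le> c0" using cb by simp
    qed
    have f: "(N - c)*(W s' rc - c) \<le> c*(Ph s' rc - Ph sc rc)"
      using foc[OF _ _ _ _ g cvo, of s' rc] m0 m1 t1 t2 N cp cb s'
      unfolding W_def Ph_def c_def by auto
    have bal: "al* s' = be*rc" unfolding s'_def using al by simp
    define D' where "D' = al* sc - be*rc"
    have Dp: "0 < D'" using D unfolding D'_def by simp
    have e1: "Ph s' rc = 0" unfolding Ph_def using Phf_bal[OF bal] by simp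
    have e2: "Ph sc rc = t1*D'" unfolding Ph_def D'_def using Phf_pos D by simp
    have e3: "W s' rc - c = -(h*D')" unfolding c_def D'_def using Wid[of s' rc] Wid[of sc rc] bal
      by (simp add: algebra_simps)
    have "(N - c)*(-(h*D')) \<le> c*(0 - t1*D')" using f by (simp only: e1 e2 e3)
    moreover have "(N - c)*(-(h*D')) = -(((N - c)*h)*D')" by (simp add: algebra_simps)
    moreover have "c*(0 - t1*D') = -((c*t1)*D')" by (simp add: algebra_simps)
    ultimately have "(c*t1)*D' \<le> ((N - c)*h)*D'" by linarith
    hence "c*t1 \<le> (N - c)*h" using Dp by (simp add: mult_le_cancel_right)
    thus ?thesis by (simp add: algebra_simps)
  qed
  have ck: "c \<le> kap*rc" if D: "al* sc \<le> be*rc"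
  proof -
    have "h*(al* sc - be*rc) \<le> 0" using D hpos by (simp add: mult_nonneg_nonpos)
    thus ?thesis unfolding c_def using Wid[of sc rc] by simp
  qed
  have rsum: "kap*ra + kap*rc \<le> K"
  proof -
    have "kap*(ra+rc) \<le> kap*B1" using kap0 bc cb by (intro mult_left_mono) auto
    thus ?thesis unfolding K_def by (simp add: algebra_simps)
  qed
  have lb: "(h+t1)*W s r \<le> h*M + t1*(kap*r)" if "W s r + Ph s r \<le> M" for s r
  proof -
    have "W s r + t1 * max 0 (al* s - be*r) \<le> M" using that Phge[of s r] by linarith
    thus ?thesis using lin_bound[OF hpos t1 Wle[of s r]] by simp
  qed
  have la: "(h+t1)*a \<le> h*M + t1*(kap*ra)" using lb ya unfolding a_def W_def Ph_def by simp
  have lA: "(h+t1)*A \<le> h*M + t1*(kap*rh)" using lb avb unfolding A_def by simp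
  have posdir: "a + c \<le> 5/4*T" if D: "be*rc < al* sc" and CV: "C \<ge> V \<or> C*(h+t1) \<ge> h*N"
  proof -
    have "a + c \<le> T" 
    proof (cases "C \<ge> V")
      case True thus ?thesis using sumB unfolding T_def V_def by linarith
    next
      case False
      hence "C*(h+t1) \<ge> c*(h+t1)" using CV cu[OF D] by linarith
      hence "C \<ge> c" using hpos t1 by (simp add: mult_le_cancel_right)
      thus ?thesis using aA unfolding T_def by linarith
    qed
    thus ?thesis using T54 by linarith
  qed
  have Kdef2: "K = kap*B1" by (simp add: K_def)
  have K0: "0 \<le> K" unfolding K_def using kap0 B by simp
  have bB: "be*B1/al \<le> B0" using orient al by (simp add: field_simps)
  have bB0: "0 \<le> be*B1/al" using be B al by simp
  have Ueq: "U = m0*(B0 - be*B1/al)" unfolding U_def E_def h_def using al by (simp add: field_simps)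
  have goal: "a + c \<le> 5/4*T"
  proof (cases "K + U \<le> A")
    case True thus ?thesis using sumB T54 C0 unfolding T_def by linarith
  next
    case notbig: False
    hence Vpos: "0 < V" unfolding V_def by simp
    show ?thesis
    proof (cases "M \<le> K")
      case MK: True
      have AM: "M \<le> A"
      proof (cases "K = 0")
        case True thus ?thesis using MK M0 A0 by simp
      next
        case False
        hence Kp: "0 < K" using K0 by simp
        define th where "th = M/K"
        have th: "0 \<le> th" "th \<le> 1" using MK M0 Kp by (auto simp: th_def)
        define sv where "sv = th*(be*B1/al)"
        define rv where "rv = th*B1"
        have sv: "0 \<le> sv" "sv \<le> B0"
        proof -
          show "0 \<le> sv" unfolding sv_def using th bB0 by (intro mult_nonneg_nonneg)
          have "sv \<le> be*B1/al" unfolding sv_def by (rule mult_left_le_one_le[OF bB0 th])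
          thus "sv \<le> B0" using bB by simp
        qed
        have rv: "0 \<le> rv" "rv \<le> B1" unfolding rv_def using th B mult_left_le_one_le[OF B(2) th] by auto
        have bal: "al* sv = be*rv" unfolding sv_def rv_def using al by simp
        have "W sv rv = th*K" using Wid[of sv rv] bal unfolding rv_def K_def by simp
        also have "\<dots> = M" unfolding th_def using Kp by simp
        finally have Wv: "W sv rv = M" .
        have "Ph sv rv = 0" unfolding Ph_def using Phf_bal[OF bal] by simp
        hence "W sv rv \<le> A" using avo[OF sv(1) sv(2) rv(1) rv(2)] Wv by simp
        thus ?thesis using Wv by simp
      qed
      have AeM: "A = M" using AM avb(5) Phnn[of sh rh] by linarith
      have Ph0: "Ph sh rh \<le> 0" using AeM avb(5) by linarith
      have balh: "al* sh = be*rh" using Phf_zero[OF t1 t2] Ph0 unfolding Ph_def by simp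
      have Akap: "A = kap*rh" unfolding A_def using Wid[of sh rh] balh by simp
      have C1: "C \<ge> N \<or> C \<ge> K - A"
      proof (rule ccontr)
        assume "\<not> (C \<ge> N \<or> C \<ge> K - A)"
        hence CN: "C < N" and CK: "C < K - A" by auto
        define s1 where "s1 = be*(B1 - rh)/al"
        have bal1: "al* s1 = be*(B1-rh)" unfolding s1_def using al by simp
        have r1: "0 \<le> B1 - rh" "B1 - rh \<le> B1 - rh" using avb by auto
        have s1: "0 \<le> s1" "s1 \<le> B0 - sh"
        proof -
          show "0 \<le> s1" unfolding s1_def using be avb al by simp
          have "al* s1 \<le> al*(B0 - sh)" using bal1 balh orient by (simp add: algebra_simps)
          thus "s1 \<le> B0 - sh" using al by simp
        qed
        have W1: "W s1 (B1-rh) = K - A" using Wid[of s1 "B1-rh"] bal1 Akap unfolding K_def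
          by (simp add: algebra_simps)
        have Ph1: "Ph s1 (B1-rh) = 0" unfolding Ph_def using Phf_bal[OF bal1] by simp
        have Cp: "0 < C" using cvopt_pos[OF cvr s1 r1] W1 CK C0 unfolding C_def W_def by auto
        have f: "(N - C)*(W s1 (B1-rh) - C) \<le> C*(Ph s1 (B1-rh) - Ph sz rz)"
          using foc[OF _ _ _ _ g cvr, of s1 "B1-rh"] m0 m1 t1 t2 N Cp s1 r1
          unfolding W_def Ph_def C_def by auto
        hence "(N - C)*(K - A - C) \<le> -(C*Ph sz rz)" using W1 Ph1 by (simp add: algebra_simps)
        moreover have "0 < (N - C)*(K - A - C)" using CN CK by simp
        moreover have "0 \<le> C*Ph sz rz" using C0 Phnn[of sz rz] by simp
        ultimately show False by linarith
      qed
      have C2: "C \<ge> V \<or> C*(h+t1) \<ge> h*N"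
      proof (rule ccontr)
        assume "\<not> (C \<ge> V \<or> C*(h+t1) \<ge> h*N)"
        hence CV: "C < V" and Cu: "C*(h+t1) < h*N" by auto
        have r2: "0 \<le> B0 - sh" "B0 - sh \<le> B0 - sh" "0 \<le> B1 - rh" "B1 - rh \<le> B1 - rh" using avb by auto
        have W2: "W (B0-sh) (B1-rh) = V" unfolding V_def A_def W_def using WB Wf_diff unfolding W_def by simp
        have Cp: "0 < C" using cvopt_pos[OF cvr r2] W2 Vpos unfolding C_def W_def by auto
        have f: "(N - C)*(W (B0-sh) (B1-rh) - C) \<le> C*(Ph (B0-sh) (B1-rh) - Ph sz rz)"
          using foc[OF _ _ _ _ g cvr, of "B0-sh" "B1-rh"] m0 m1 t1 t2 N Cp r2
          unfolding W_def Ph_def C_def by auto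
        have D2: "al*(B0-sh) - be*(B1-rh) = E" unfolding E_def using balh by (simp add: algebra_simps)
        have Ph2: "Ph (B0-sh) (B1-rh) = t1*E" unfolding Ph_def using Phf_pos[of be "B1-rh" al "B0-sh"] D2 E0
          by simp
        define X where "X = max 0 (al* sz - be*rz)"
        have "kap*rz \<le> kap*(B1 - rh)" using kap0 zb by (intro mult_left_mono) auto
        hence Xz: "C - (K - A) \<le> h*X" using Wle[of sz rz] Akap unfolding C_def X_def K_def
          by (simp add: algebra_simps)
        have Pz: "t1*X \<le> Ph sz rz" unfolding X_def using Phge by simp
        have "t1*(C - (K - A)) \<le> t1*(h*X)" using Xz t1 by (intro mult_left_mono) auto
        moreover have "h*(t1*X) \<le> h*Ph sz rz" using Pz hpos by (intro mult_left_mono) auto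
        ultimately have hPz: "t1*(C - (K - A)) \<le> h*Ph sz rz" by (simp add: algebra_simps)
        have "h*((N - C)*(V - C)) \<le> h*(C*(t1*E - Ph sz rz))" using f W2 Ph2 hpos
          by (intro mult_left_mono) auto
        hence "h*((N - C)*(V - C)) \<le> C*(t1*U) - C*(h*Ph sz rz)" unfolding U_def by (simp add: algebra_simps)
        moreover have "C*(t1*(C - (K - A))) \<le> C*(h*Ph sz rz)" using hPz C0 by (intro mult_left_mono) auto
        ultimately have "h*((N - C)*(V - C)) \<le> C*(t1*(V - C))" unfolding V_def by (simp add: algebra_simps)
        hence "(V - C)*(h*N - C*(h+t1)) \<le> 0" by (simp add: algebra_simps)
        moreover have "0 < (V - C)*(h*N - C*(h+t1))" using CV Cu by simp
        ultimately show False by linarith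
      qed
      show ?thesis
      proof (cases "be*rc < al* sc")
        case True thus ?thesis using posdir C2 by simp
      next
        case False
        hence cK: "c \<le> K - kap*ra" using ck rsum by linarith
        show ?thesis
        proof (cases "C \<ge> N")
          case True thus ?thesis using aA cN T54 unfolding T_def by linarith
        next
          case CN: False
          hence TK: "K \<le> T" using C1 unfolding T_def by linarith
          show ?thesis
          proof (cases "C \<ge> V")
            case True thus ?thesis using sumB T54 unfolding T_def V_def by linarith
          next
            case False
            hence Cu: "C*(h+t1) \<ge> h*N" using C2 by simp
            define u where "u = h/(h+t1)"
            have ht: "0 < h + t1" using hpos t1 by simp
            have u: "0 < u" "u < 1" unfolding u_def using hpos t1 by auto
            have "u*N \<le> C" unfolding u_def using Cu ht by (simp add: field_simps)
            hence Tu: "M + u*N \<le> T" using AeM unfolding T_def by simp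
            have omu: "1 - u = t1/(h+t1)" unfolding u_def using ht by (simp add: field_simps)
            have "a \<le> (h*M + t1*(kap*ra))/(h+t1)" using la ht by (simp add: field_simps)
            moreover have "(1-u)*(kap*ra) = t1*(kap*ra)/(h+t1)" using omu by simp
            moreover have "u*M = h*M/(h+t1)" unfolding u_def by simp
            ultimately have au: "a \<le> u*M + (1-u)*(kap*ra)" by (simp add: add_divide_distrib)
            have k0: "0 \<le> kap*ra" using kap0 ya by simp
            show ?thesis using claim_u[OF u aM au cN cK k0 TK Tu c0'] .
          qed
        qed
      qed
    next
      case MK: False
      have ht: "0 < h + t1" using hpos t1 by simp
      have den: "0 < m0 + t1*al" using m0 t1 al by (simp add: add_pos_pos)
      define e where "e = min (B0 - be*B1/al) ((M - K)/(m0 + t1*al))"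
      have e0: "0 \<le> e" unfolding e_def using bB MK den by simp
      define sv where "sv = be*B1/al + e"
      have sv: "0 \<le> sv" "sv \<le> B0" unfolding sv_def e_def using bB0 e0 e_def by auto
      have rv: "0 \<le> B1" "B1 \<le> B1" using B by auto
      have Dv: "al* sv - be*B1 = al*e" unfolding sv_def using al by (simp add: algebra_simps)
      have "W sv B1 = kap*B1 + h*(al* sv - be*B1)" by (rule Wid)
      also have "\<dots> = kap*B1 + (h*al)*e" using Dv by simp
      also have "\<dots> = K + m0*e" using hal K_def by simp
      finally have Wv: "W sv B1 = K + m0*e" .
      have "0 \<le> al*e" using al e0 by simp
      hence "be*B1 \<le> al* sv" using Dv by linarith
      hence Phv: "Ph sv B1 = t1*(al*e)" unfolding Ph_def using Phf_pos Dv by metis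
      have "(m0 + t1*al)*e \<le> (m0 + t1*al)*((M - K)/(m0 + t1*al))" unfolding e_def
        using den by (intro mult_left_mono) auto
      hence "(m0 + t1*al)*e \<le> M - K" using den by simp
      hence "W sv B1 + Ph sv B1 \<le> M" using Wv Phv by (simp add: algebra_simps)
      hence AWv: "K + m0*e \<le> A" using avo[OF sv rv] Wv by simp
      have eU: "e = (M - K)/(m0 + t1*al)"
      proof (rule ccontr)
        assume "e \<noteq> (M - K)/(m0 + t1*al)"
        hence "e = B0 - be*B1/al" unfolding e_def by (auto simp: min_def split: if_splits)
        hence "m0*e = U" using Ueq by simp
        thus False using AWv notbig by simp
      qed
      have me: "(m0 + t1*al)*(m0*e) = m0*(M-K)" unfolding eU using den by simp
      have "(m0 + t1*al)*(K + m0*e) \<le> (m0 + t1*al)*A" using AWv den by (intro mult_left_mono) auto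
      hence "m0*M + t1*al*K \<le> (m0 + t1*al)*A" using me by (simp add: algebra_simps)
      hence "al*(h*M + t1*K) \<le> al*((h+t1)*A)" unfolding hal[symmetric] by (simp add: algebra_simps)
      hence Alow: "h*M + t1*K \<le> (h+t1)*A" using al by simp
      hence "t1*K \<le> t1*(kap*rh)" using lA by linarith
      hence "K \<le> kap*rh" using t1 by simp
      moreover have "0 \<le> kap*(B1 - rh)" using kap0 avb by simp
      moreover have "kap*(B1 - rh) = K - kap*rh" unfolding K_def by (simp add: algebra_simps)
      ultimately have kz: "kap*(B1 - rh) = 0" by linarith
      have "0 \<le> m1*(B1 - rh)" "0 \<le> h*be*(B1 - rh)" using m1 hpos be avb by auto
      moreover have "kap*(B1 - rh) = m1*(B1 - rh) + h*be*(B1 - rh)" unfolding kap_def by (simp add: algebra_simps)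
      ultimately have m1z: "m1*(B1 - rh) = 0" using kz by linarith
      have "m1*(B1-rh) = m1*B1 - m1*rh" by (simp add: algebra_simps)
      moreover have "W (B0-sh) 0 = m0*B0 - m0* sh" unfolding W_def Wf_def by (simp add: algebra_simps)
      moreover have "A = m0* sh + m1*rh" unfolding A_def W_def Wf_def by simp
      moreover have "W B0 B1 = m0*B0 + m1*B1" unfolding W_def Wf_def by simp
      ultimately have Vw: "W (B0 - sh) 0 = V" using WB m1z unfolding V_def by linarith
      have Phw0: "Ph (B0 - sh) 0 = t1*(al*(B0 - sh))" unfolding Ph_def
        using Phf_pos[of be 0 al "B0 - sh"] avb al by simp
      have "h*Ph (B0 - sh) 0 = t1*((h*al)*(B0 - sh))" unfolding Phw0 by (simp add: algebra_simps)
      also have "\<dots> = t1*W (B0 - sh) 0" unfolding hal W_def Wf_def by simp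
      finally have Phw: "h*Ph (B0 - sh) 0 = t1*V" using Vw by simp
      have "kap*rz \<le> kap*(B1 - rh)" using kap0 zb by (intro mult_left_mono) auto
      hence kz2: "kap*rz = 0" using kz kap0 zb by (metis antisym mult_nonneg_nonneg)
      define X where "X = max 0 (al* sz - be*rz)"
      have Cz: "C \<le> h*X" using Wle[of sz rz] kz2 unfolding C_def X_def by simp
      have Pz: "t1*X \<le> Ph sz rz" unfolding X_def using Phge by simp
      have hPz: "t1*C \<le> h*Ph sz rz"
      proof -
        have "t1*C \<le> t1*(h*X)" using Cz t1 by (intro mult_left_mono) auto
        moreover have "h*(t1*X) \<le> h*Ph sz rz" using Pz hpos by (intro mult_left_mono) auto
        ultimately show ?thesis by (simp add: algebra_simps)
      qed
      have C2: "C \<ge> V \<or> C*(h+t1) \<ge> h*N"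
      proof (rule ccontr)
        assume "\<not> (C \<ge> V \<or> C*(h+t1) \<ge> h*N)"
        hence CV: "C < V" and Cu: "C*(h+t1) < h*N" by auto
        have r2: "0 \<le> B0 - sh" "B0 - sh \<le> B0 - sh" "(0::real) \<le> 0" "0 \<le> B1 - rh" using avb by auto
        have Cp: "0 < C" using cvopt_pos[OF cvr r2(1) r2(2) r2(3) r2(4)] Vw Vpos unfolding C_def W_def by auto
        have f: "(N - C)*(W (B0-sh) 0 - C) \<le> C*(Ph (B0-sh) 0 - Ph sz rz)"
          using foc[OF _ _ _ _ g cvr, of "B0-sh" 0] m0 m1 t1 t2 N Cp r2
          unfolding W_def Ph_def C_def by auto
        have "h*((N - C)*(V - C)) \<le> h*(C*(Ph (B0-sh) 0 - Ph sz rz))" using f Vw hpos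
          by (intro mult_left_mono) auto
        hence "h*((N - C)*(V - C)) \<le> C*(h*Ph (B0-sh) 0) - C*(h*Ph sz rz)" by (simp add: algebra_simps)
        moreover have "C*(t1*C) \<le> C*(h*Ph sz rz)" using hPz C0 by (intro mult_left_mono) auto
        ultimately have "h*((N - C)*(V - C)) \<le> C*(t1*(V - C))" using Phw by (simp add: algebra_simps)
        hence "(V - C)*(h*N - C*(h+t1)) \<le> 0" by (simp add: algebra_simps)
        moreover have "0 < (V - C)*(h*N - C*(h+t1))" using CV Cu by simp
        ultimately show False by linarith
      qed
      show ?thesis
      proof (cases "be*rc < al* sc")
        case True thus ?thesis using posdir C2 by simp
      next
        case False
        hence cK: "c \<le> K - kap*ra" using ck rsum by linarith
        show ?thesis
        proof (cases "C \<ge> V")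
          case True thus ?thesis using sumB T54 unfolding T_def V_def by linarith
        next
          case False
          hence Cu: "C*(h+t1) \<ge> h*N" using C2 by simp
          have "h*c \<le> h*N" using cN hpos by simp
          moreover have "t1*c \<le> t1*(K - kap*ra)" using cK t1 by simp
          ultimately have "(h+t1)*(a+c) \<le> h*M + t1*K + h*N" using la by (simp add: algebra_simps)
          also have "\<dots> \<le> (h+t1)*T" using Alow Cu unfolding T_def by (simp add: algebra_simps)
          finally have "a + c \<le> T" using ht by simp
          thus ?thesis using T54 by linarith
        qed
      qed
    qed
  qed
  thus ?thesis unfolding a_def c_def T_def A_def C_def W_def by simp
qed



lemma le54: "(x::real) \<le> y \<Longrightarrow> 0 \<le> y \<Longrightarrow> x \<le> 5/4*y" by linarith

lemma cvopt_le_N: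
  assumes "cvopt m0 m1 al be t1 t2 N g c0 c1 s r" "0 \<le> m0" "0 \<le> m1" "0 \<le> t1" "0 \<le> t2" "0 < g" "0 \<le> N"
  shows "Wf m0 m1 s r \<le> N"
proof -
  have b: "0 \<le> s" "0 \<le> r" "0 \<le> c0" "0 \<le> c1" using assms(1) unfolding cvopt_def by auto
  show ?thesis
  proof (cases "Wf m0 m1 s r = 0")
    case True thus ?thesis using assms by simp
  next
    case False
    hence cp: "0 < Wf m0 m1 s r" using Wf_nn[OF assms(2,3) b(1,2)] by simp
    have "(N - Wf m0 m1 s r)*(Wf m0 m1 0 0 - Wf m0 m1 s r) \<le> Wf m0 m1 s r*(Phf al be t1 t2 0 0 - Phf al be t1 t2 s r)"
      using foc[OF assms(2-6) assms(1), of 0 0] b cp assms(7) by auto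
    moreover have "Wf m0 m1 0 0 = 0" "Phf al be t1 t2 0 0 = 0" unfolding Wf_def Phf_def by auto
    ultimately have "(N - Wf m0 m1 s r)*Wf m0 m1 s r \<ge> Wf m0 m1 s r * Phf al be t1 t2 s r" by (simp add: algebra_simps)
    moreover have "0 \<le> Wf m0 m1 s r * Phf al be t1 t2 s r" using cp Phf_nn[OF assms(4,5)] by simp
    ultimately have "0 \<le> (N - Wf m0 m1 s r)*Wf m0 m1 s r" by linarith
    thus ?thesis using cp by (simp add: zero_le_mult_iff)
  qed
qed

lemma core_deg:
  fixes m0 m1 al be t1 t2 B0 B1 M N g :: real
  assumes m0: "0 \<le> m0" and m1: "0 \<le> m1" and al: "al = 0" and be: "be = 0"
    and t1: "0 \<le> t1" and t2: "0 \<le> t2" and N: "0 < N" and g: "0 < g"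
    and B: "0 \<le> B0" "0 \<le> B1" and M0: "0 \<le> M"
    and av: "avopt m0 m1 al be t1 t2 B0 B1 M sh rh"
    and cvr: "cvopt m0 m1 al be t1 t2 N g (B0 - sh) (B1 - rh) sz rz"
    and ya: "0 \<le> sa" "0 \<le> ra" "Wf m0 m1 sa ra + Phf al be t1 t2 sa ra \<le> M"
    and bc: "0 \<le> c0" "0 \<le> c1" "sa + c0 \<le> B0" "ra + c1 \<le> B1"
    and cvo: "cvopt m0 m1 al be t1 t2 N g c0 c1 sc rc"
  shows "Wf m0 m1 sa ra + Wf m0 m1 sc rc \<le> Wf m0 m1 sh rh + Wf m0 m1 sz rz"
proof -
  define W where "W = Wf m0 m1"
  define A where "A = W sh rh"
  define C where "C = W sz rz"
  define a where "a = W sa ra"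
  define c where "c = W sc rc"
  define WB where "WB = W B0 B1"
  define V where "V = WB - A"
  have Ph0: "Phf al be t1 t2 s r = 0" for s r unfolding Phf_def al be by simp
  have Wnn: "0 \<le> s \<Longrightarrow> 0 \<le> r \<Longrightarrow> 0 \<le> W s r" for s r unfolding W_def using Wf_nn m0 m1 by simp
  have avb: "0 \<le> sh" "sh \<le> B0" "0 \<le> rh" "rh \<le> B1" "A \<le> M"
    using av unfolding avopt_def A_def W_def Ph0 by auto
  have avo: "\<And>s r. 0 \<le> s \<Longrightarrow> s \<le> B0 \<Longrightarrow> 0 \<le> r \<Longrightarrow> r \<le> B1 \<Longrightarrow> W s r \<le> M \<Longrightarrow> W s r \<le> A"
    using av unfolding avopt_def A_def W_def Ph0 by auto
  have zb: "0 \<le> sz" "sz \<le> B0 - sh" "0 \<le> rz" "rz \<le> B1 - rh" using cvr unfolding cvopt_def by auto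
  have cb: "0 \<le> sc" "sc \<le> c0" "0 \<le> rc" "rc \<le> c1" using cvo unfolding cvopt_def by auto
  have C0: "0 \<le> C" unfolding C_def using Wnn zb by simp
  have aA: "a \<le> A" unfolding a_def using avo ya bc Ph0 by (simp add: W_def)
  have aM: "a \<le> M" using ya unfolding a_def W_def Ph0 by simp
  have cN: "c \<le> N" unfolding c_def W_def using cvopt_le_N[OF cvo m0 m1 t1 t2 g] N by simp
  have sumB: "a + c \<le> WB"
  proof -
    have "m0*(sa+sc) \<le> m0*B0" using m0 ya bc cb by (intro mult_left_mono) auto
    moreover have "m1*(ra+rc) \<le> m1*B1" using m1 ya bc cb by (intro mult_left_mono) auto
    ultimately show ?thesis unfolding a_def c_def WB_def W_def Wf_def by (simp add: algebra_simps)
  qed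
  have AWB: "min M WB \<le> A"
  proof (cases "WB \<le> M")
    case True
    hence "WB \<le> A" using avo[of B0 B1] B unfolding WB_def by simp
    thus ?thesis by simp
  next
    case False
    hence WBp: "0 < WB" using M0 by simp
    define th where "th = M/WB"
    have th: "0 \<le> th" "th \<le> 1" using False M0 WBp by (auto simp: th_def)
    have s: "0 \<le> th*B0" "th*B0 \<le> B0" using th B mult_left_le_one_le[OF B(1) th] by auto
    have r: "0 \<le> th*B1" "th*B1 \<le> B1" using th B mult_left_le_one_le[OF B(2) th] by auto
    have "W (th*B0) (th*B1) = th*WB" unfolding WB_def W_def Wf_def by (simp add: algebra_simps)
    also have "\<dots> = M" unfolding th_def using WBp by simp
    finally have "W (th*B0) (th*B1) = M" .
    hence "M \<le> A" using avo[OF s r] by simp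
    thus ?thesis by simp
  qed
  have CV: "C \<ge> N \<or> C \<ge> V"
  proof (rule ccontr)
    assume "\<not> (C \<ge> N \<or> C \<ge> V)"
    hence CN: "C < N" and CVl: "C < V" by auto
    have r2: "0 \<le> B0 - sh" "B0 - sh \<le> B0 - sh" "0 \<le> B1 - rh" "B1 - rh \<le> B1 - rh" using avb by auto
    have W2: "W (B0-sh) (B1-rh) = V" unfolding V_def A_def WB_def W_def using Wf_diff by simp
    have Cp: "0 < C" using cvopt_pos[OF cvr r2] W2 CVl C0 unfolding C_def W_def by auto
    have "(N - C)*(W (B0-sh) (B1-rh) - C) \<le> C*(Phf al be t1 t2 (B0-sh) (B1-rh) - Phf al be t1 t2 sz rz)"
      using foc[OF m0 m1 t1 t2 g cvr, of "B0-sh" "B1-rh"] N Cp r2 unfolding W_def C_def by auto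
    hence "(N - C)*(V - C) \<le> 0" using W2 Ph0 by simp
    moreover have "0 < (N - C)*(V - C)" using CN CVl by simp
    ultimately show False by linarith
  qed
  have "a + c \<le> A + C"
  proof (cases "WB \<le> A")
    case True thus ?thesis using sumB C0 by linarith
  next
    case False
    hence AM: "M \<le> A" using AWB by (simp add: min_def split: if_splits)
    show ?thesis using CV aM cN AM sumB unfolding V_def by linarith
  qed
  thus ?thesis unfolding a_def c_def A_def C_def W_def .
qed

lemma combine:
  fixes a c A C R :: real
  assumes "a \<le> A" "0 \<le> a" "0 \<le> c" "a + c \<le> 5/4*(A + C)" "0 \<le> R" "R \<le> 1"
  shows "a + R*c \<le> 5/4*(A + R*C)"
proof (cases "4*c \<le> 5*C")
  case True
  hence "R*(4*c) \<le> R*(5*C)" using assms by (intro mult_left_mono) auto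
  thus ?thesis using assms by (simp add: algebra_simps)
next
  case False
  have "0 \<le> (1-R)*(4*c - 5*C)" using False assms by simp
  thus ?thesis using assms by (simp add: algebra_simps)
qed

lemma Wf_swap: "Wf m0 m1 s r = Wf m1 m0 r s" unfolding Wf_def by simp
lemma Phf_swap: "Phf al be t1 t2 s r = Phf be al t2 t1 r s" unfolding Phf_def by (simp add: algebra_simps)
lemma Fv_swap: "Fv m0 m1 al be t1 t2 N g s r = Fv m1 m0 be al t2 t1 N g r s"
  unfolding Fv_def using Wf_swap Phf_swap by metis
lemma cvopt_swap: "cvopt m0 m1 al be t1 t2 N g c0 c1 s r = cvopt m1 m0 be al t2 t1 N g c1 c0 r s"
  unfolding cvopt_def using Wf_swap Fv_swap by metis
lemma avopt_swap: "avopt m0 m1 al be t1 t2 B0 B1 M s r = avopt m1 m0 be al t2 t1 B1 B0 M r s"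
  unfolding avopt_def using Wf_swap Phf_swap by metis

lemma core_all:
  fixes m0 m1 al be t1 t2 B0 B1 M N g R :: real
  assumes m0: "0 \<le> m0" and m1: "0 \<le> m1" and al: "0 \<le> al" and be: "0 \<le> be"
    and alm: "0 < al \<Longrightarrow> 0 < m0" and bem: "0 < be \<Longrightarrow> 0 < m1"
    and t1: "0 < t1" and t2: "0 < t2" and N: "0 < N" and g: "0 < g"
    and B: "0 \<le> B0" "0 \<le> B1" and M0: "0 \<le> M" and R: "0 \<le> R" "R \<le> 1"
    and av: "avopt m0 m1 al be t1 t2 B0 B1 M sh rh"
    and cvr: "cvopt m0 m1 al be t1 t2 N g (B0 - sh) (B1 - rh) sz rz"
    and ya: "0 \<le> sa" "0 \<le> ra" "Wf m0 m1 sa ra + Phf al be t1 t2 sa ra \<le> M"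
    and bc: "0 \<le> c0" "0 \<le> c1" "sa + c0 \<le> B0" "ra + c1 \<le> B1"
    and cvo: "cvopt m0 m1 al be t1 t2 N g c0 c1 sc rc"
  shows "Wf m0 m1 sa ra + R * Wf m0 m1 sc rc \<le> 5/4 * (Wf m0 m1 sh rh + R * Wf m0 m1 sz rz)"
proof -
  have tot: "Wf m0 m1 sa ra + Wf m0 m1 sc rc \<le> 5/4 * (Wf m0 m1 sh rh + Wf m0 m1 sz rz)"
  proof (cases "0 < al \<and> be*B1 \<le> al*B0")
    case True
    thus ?thesis using core_total[OF alm[OF conjunct1[OF True]] m1 _ be t1 t2 N g B _ M0 av cvr ya bc cvo] by auto
  next
    case F1: False
    show ?thesis
    proof (cases "0 < be \<and> al*B0 \<le> be*B1")
      case True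
      have av': "avopt m1 m0 be al t2 t1 B1 B0 M rh sh" using av avopt_swap by metis
      have cvr': "cvopt m1 m0 be al t2 t1 N g (B1 - rh) (B0 - sh) rz sz" using cvr cvopt_swap by metis
      have ya': "Wf m1 m0 ra sa + Phf be al t2 t1 ra sa \<le> M" using ya(3) Wf_swap Phf_swap by metis
      have cvo': "cvopt m1 m0 be al t2 t1 N g c1 c0 rc sc" using cvo cvopt_swap by metis
      have "Wf m1 m0 ra sa + Wf m1 m0 rc sc \<le> 5/4 * (Wf m1 m0 rh sh + Wf m1 m0 rz sz)"
        using core_total[OF bem[OF conjunct1[OF True]] m0 conjunct1[OF True] al t2 t1 N g B(2) B(1)
            conjunct2[OF True] M0 av' cvr' ya(2) ya(1) ya' bc(2) bc(1) bc(4) bc(3) cvo'] .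
      thus ?thesis using Wf_swap by metis
    next
      case False
      hence "al = 0" "be = 0" using F1 al be B by (auto simp: not_less)
      hence "Wf m0 m1 sa ra + Wf m0 m1 sc rc \<le> Wf m0 m1 sh rh + Wf m0 m1 sz rz"
        using core_deg[OF m0 m1 _ _ _ _ N g B M0 av cvr ya bc cvo] t1 t2 by auto
      moreover have "0 \<le> Wf m0 m1 sh rh + Wf m0 m1 sz rz"
        using av cvr Wf_nn[OF m0 m1] unfolding avopt_def cvopt_def by (meson add_nonneg_nonneg)
      ultimately show ?thesis using le54 by blast
    qed
  qed
  have aA: "Wf m0 m1 sa ra \<le> Wf m0 m1 sh rh" using av ya bc unfolding avopt_def by auto
  have a0: "0 \<le> Wf m0 m1 sa ra" using Wf_nn[OF m0 m1 ya(1,2)] .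
  have c0: "0 \<le> Wf m0 m1 sc rc" using cvo Wf_nn[OF m0 m1] unfolding cvopt_def by auto
  show ?thesis using combine[OF aA a0 c0 tot R] .
qed



lemma cvopt_exists:
  fixes c0 c1 m0 m1 t1 t2 g N :: real
  assumes c: "0 \<le> c0" "0 \<le> c1" and m: "0 \<le> m0" "0 \<le> m1" and t: "0 \<le> t1" "0 \<le> t2"
    and g: "0 < g" and N: "0 < N" and pos: "0 < Wf m0 m1 c0 c1"
  shows "\<exists>s r. cvopt m0 m1 al be t1 t2 N g c0 c1 s r"
proof -
  define F where "F = (\<lambda>z::real\<times>real. Fv m0 m1 al be t1 t2 N g (fst z) (snd z))"
  define v0 where "v0 = Fv m0 m1 al be t1 t2 N g c0 c1"
  define ep where "ep = min (Wf m0 m1 c0 c1) (exp (v0/N) / g)"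
  have ep: "0 < ep" unfolding ep_def using pos g by simp
  define S where "S = ({0..c0} \<times> {0..c1}) \<inter> {z. ep \<le> Wf m0 m1 (fst z) (snd z)}"
  have cl: "closed {z::real\<times>real. ep \<le> Wf m0 m1 (fst z) (snd z)}"
    unfolding Wf_def by (intro closed_Collect_le continuous_intros)
  have cS: "compact S" unfolding S_def
    by (intro compact_Int_closed compact_Times compact_Icc cl)
  have ne: "(c0, c1) \<in> S" unfolding S_def ep_def using c by auto
  have cont: "continuous_on S F"
  proof -
    have "\<forall>z\<in>S. g * (m0 * fst z + m1 * snd z) \<noteq> 0"
    proof
      fix z assume "z \<in> S"
      hence "ep \<le> m0 * fst z + m1 * snd z" unfolding S_def Wf_def by auto
      thus "g * (m0 * fst z + m1 * snd z) \<noteq> 0" using ep g by auto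
    qed
    thus ?thesis unfolding F_def Fv_def Wf_def Phf_def
      by (intro continuous_intros) auto
  qed
  obtain z where zS: "z \<in> S" and zmax: "\<forall>y\<in>S. F y \<le> F z"
    using continuous_attains_sup[OF cS _ cont] ne by blast
  have zb: "0 \<le> fst z" "fst z \<le> c0" "0 \<le> snd z" "snd z \<le> c1" "ep \<le> Wf m0 m1 (fst z) (snd z)"
    using zS unfolding S_def by auto
  have v0z: "v0 \<le> F z" using zmax ne unfolding F_def v0_def by auto
  have "cvopt m0 m1 al be t1 t2 N g c0 c1 (fst z) (snd z)"
    unfolding cvopt_def
  proof (intro conjI zb(1-4) allI impI)
    fix s' r' assume s': "0 \<le> s'" "s' \<le> c0" and r': "0 \<le> r'" "r' \<le> c1" and Wp: "0 < Wf m0 m1 s' r'"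
    show "0 < Wf m0 m1 (fst z) (snd z)" using zb ep by linarith
    show "Fv m0 m1 al be t1 t2 N g s' r' \<le> Fv m0 m1 al be t1 t2 N g (fst z) (snd z)"
    proof (cases "ep \<le> Wf m0 m1 s' r'")
      case True
      hence "(s', r') \<in> S" unfolding S_def using s' r' by auto
      thus ?thesis using zmax unfolding F_def by fastforce
    next
      case False
      hence "Wf m0 m1 s' r' < exp (v0/N) / g" unfolding ep_def by simp
      hence "g * Wf m0 m1 s' r' < exp (v0/N)" using g by (simp add: field_simps)
      moreover have "0 < g * Wf m0 m1 s' r'" using g Wp by simp
      ultimately have "ln (g * Wf m0 m1 s' r') < ln (exp (v0/N))" by (subst ln_less_cancel_iff) auto
      hence "ln (g * Wf m0 m1 s' r') < v0/N" by simp
      hence l: "N * ln (g * Wf m0 m1 s' r') < v0" using N by (simp add: pos_less_divide_eq mult.commute)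
      have "0 \<le> Phf al be t1 t2 s' r'" using Phf_nn t by simp
      hence "Fv m0 m1 al be t1 t2 N g s' r' < v0" using l Wp unfolding Fv_def by linarith
      thus ?thesis using v0z unfolding F_def by simp
    qed
  qed
  thus ?thesis by blast
qed



lemma regs2: "regs 2 = {0,1}" by (auto simp: regs_def)
lemma sum_regs2: "(\<Sum>i\<in>regs 2. f i) = f 0 + f (1::nat)" by (simp add: regs2)
lemma wsum2: "wsum 2 rr x = rr 0 0 * x 0 0 + rr 0 1 * x 0 1 + rr 1 0 * x 1 0 + rr 1 1 * x 1 1"
  unfolding wsum_def sum_regs2 by simp
lemma brow2: "brow 2 b i = b i 0 + b i 1" unfolding brow_def sum_regs2 by simp
lemma meantrip2: "meantrip 2 b t a = qq 2 b a 0 * t a 0 + qq 2 b a 1 * t a 1"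
  unfolding meantrip_def sum_regs2 by simp
lemma nonneg2: "nonneg 2 x \<longleftrightarrow> 0 \<le> x 0 0 \<and> 0 \<le> x 0 1 \<and> 0 \<le> x 1 0 \<and> 0 \<le> x 1 1"
  unfolding nonneg_def regs2 by auto
lemma fb2: "flow_balance 2 b x \<longleftrightarrow>
   (x 0 0 + x 1 0) * qq 2 b 0 0 + (x 0 1 + x 1 1) * qq 2 b 1 0 = x 0 0 + x 0 1 \<and>
   (x 0 0 + x 1 0) * qq 2 b 0 1 + (x 0 1 + x 1 1) * qq 2 b 1 1 = x 1 0 + x 1 1"
  unfolding flow_balance_def regs2 by simp
lemma colsum2: "(\<Sum>j\<in>regs 2. x j i) = x 0 i + x 1 i" unfolding sum_regs2 by simp

definition ys :: "(nat \<Rightarrow> nat \<Rightarrow> real) \<Rightarrow> real" where "ys x = x 0 0 + x 1 0"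
definition yr :: "(nat \<Rightarrow> nat \<Rightarrow> real) \<Rightarrow> real" where "yr x = x 0 1 + x 1 1"
definition mkx :: "real \<Rightarrow> real \<Rightarrow> real \<Rightarrow> real \<Rightarrow> nat \<Rightarrow> nat \<Rightarrow> real" where
  "mkx al be s r = (\<lambda>i a. if i = 0 then (if a = 0 then s - max 0 (al* s - be*r) else max 0 (be*r - al* s))
                         else (if a = 0 then max 0 (al* s - be*r) else r - max 0 (be*r - al* s)))"

locale net =
  fixes b t :: "nat \<Rightarrow> nat \<Rightarrow> real"
  assumes bnn: "\<And>i j. i \<in> regs 2 \<Longrightarrow> j \<in> regs 2 \<Longrightarrow> 0 \<le> b i j"
    and bpos: "\<And>i. i \<in> regs 2 \<Longrightarrow> 0 < brow 2 b i"
    and tnn: "\<And>i j. i \<in> regs 2 \<Longrightarrow> j \<in> regs 2 \<Longrightarrow> 0 \<le> t i j"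
    and tpos: "\<And>i j. i \<in> regs 2 \<Longrightarrow> j \<in> regs 2 \<Longrightarrow> i \<noteq> j \<Longrightarrow> 0 < t i j"
begin

definition "m0 = meantrip 2 b t 0"
definition "m1 = meantrip 2 b t 1"
definition "al = qq 2 b 0 1"
definition "be = qq 2 b 1 0"
definition "t1 = t 1 0"
definition "t2 = t 0 1"
definition "B0 = brow 2 b 0"
definition "B1 = brow 2 b 1"

lemma r0: "(0::nat) \<in> regs 2" and r1: "(1::nat) \<in> regs 2" by (auto simp: regs2)

lemma B0pos: "0 < B0" unfolding B0_def using bpos r0 by simp
lemma B1pos: "0 < B1" unfolding B1_def using bpos r1 by simp
lemma t1pos: "0 < t1" unfolding t1_def using tpos r0 r1 by simp
lemma t2pos: "0 < t2" unfolding t2_def using tpos r0 r1 by simp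
lemma qnn: "0 \<le> qq 2 b i j" if "i \<in> regs 2" "j \<in> regs 2" for i j
  unfolding qq_def using bnn[OF that] bpos[OF that(1)] by simp
lemma qsum: "qq 2 b i 0 + qq 2 b i 1 = 1" if "i \<in> regs 2" for i
proof -
  have "brow 2 b i = b i 0 + b i 1" by (rule brow2)
  thus ?thesis unfolding qq_def using bpos[OF that] by (simp add: add_divide_distrib[symmetric])
qed
lemma al_nn: "0 \<le> al" and al_le1: "al \<le> 1" and be_nn: "0 \<le> be" and be_le1: "be \<le> 1"
  using qnn[OF r0 r1] qnn[OF r1 r0] qnn[OF r0 r0] qnn[OF r1 r1] qsum[OF r0] qsum[OF r1]
  unfolding al_def be_def by auto
lemma q00: "qq 2 b 0 0 = 1 - al" using qsum[OF r0] unfolding al_def by simp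
lemma q11: "qq 2 b 1 1 = 1 - be" using qsum[OF r1] unfolding be_def by simp
lemma m0_nn: "0 \<le> m0" unfolding m0_def meantrip2 using qnn tnn r0 r1 by simp
lemma m1_nn: "0 \<le> m1" unfolding m1_def meantrip2 using qnn tnn r0 r1 by simp
lemma m0_pos: "0 < al \<Longrightarrow> 0 < m0"
proof -
  assume a: "0 < al"
  have "0 \<le> qq 2 b 0 0 * t 0 0" using qnn tnn r0 by simp
  moreover have "0 < qq 2 b 0 1 * t 0 1" using a tpos r0 r1 unfolding al_def by simp
  ultimately show ?thesis unfolding m0_def meantrip2 by linarith
qed
lemma m1_pos: "0 < be \<Longrightarrow> 0 < m1"
proof -
  assume a: "0 < be"
  have "0 \<le> qq 2 b 1 1 * t 1 1" using qnn tnn r1 by simp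
  moreover have "0 < qq 2 b 1 0 * t 1 0" using a tpos r0 r1 unfolding be_def by simp
  ultimately show ?thesis unfolding m1_def meantrip2 by linarith
qed

lemma wsum_rA: "wsum 2 (rA 2 b t p 0) x = p * Wf m0 m1 (ys x) (yr x)"
  unfolding wsum2 rA_def Wf_def ys_def yr_def m0_def m1_def by (simp add: algebra_simps)
lemma wsum_rC: "wsum 2 (rC 2 b t p 0 R) x = p*(1-R) * Wf m0 m1 (ys x) (yr x)"
  unfolding wsum2 rC_def Wf_def ys_def yr_def m0_def m1_def by (simp add: algebra_simps)
lemma wsum_rC2P: "wsum 2 (rC2P 2 b t p R) x = p*R * Wf m0 m1 (ys x) (yr x)"
  unfolding wsum2 rC2P_def Wf_def ys_def yr_def m0_def m1_def by (simp add: algebra_simps)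
lemma wsum_tau: "wsum 2 (tau_dr 2 b t) x = Wf m0 m1 (ys x) (yr x) + t2 * x 0 1 + t1 * x 1 0"
  unfolding wsum2 tau_dr_def Wf_def ys_def yr_def m0_def m1_def t1_def t2_def by (simp add: algebra_simps)

lemma phi_le:
  assumes "nonneg 2 x" "flow_balance 2 b x"
  shows "Phf al be t1 t2 (ys x) (yr x) \<le> t2 * x 0 1 + t1 * x 1 0"
proof -
  have nn: "0 \<le> x 0 0" "0 \<le> x 0 1" "0 \<le> x 1 0" "0 \<le> x 1 1" using assms(1) nonneg2 by auto
  have f0: "(x 0 0 + x 1 0) * (1 - al) + (x 0 1 + x 1 1) * be = x 0 0 + x 0 1"
    using assms(2) unfolding fb2 q00 be_def by simp
  define D where "D = al * ys x - be * yr x"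
  have xd: "x 1 0 - x 0 1 = D" using f0 unfolding D_def ys_def yr_def by (simp add: algebra_simps)
  have "max 0 D \<le> x 1 0" using xd nn by simp
  hence "t1 * max 0 D \<le> t1 * x 1 0" using t1pos by (intro mult_left_mono) auto
  moreover have "max 0 (-D) \<le> x 0 1" using xd nn by simp
  hence "t2 * max 0 (-D) \<le> t2 * x 0 1" using t2pos by (intro mult_left_mono) auto
  moreover have "Phf al be t1 t2 (ys x) (yr x) = t1 * max 0 D + t2 * max 0 (-D)"
    unfolding Phf_def D_def by simp
  ultimately show ?thesis by linarith
qed

lemma ys_nn: "nonneg 2 x \<Longrightarrow> 0 \<le> ys x" unfolding nonneg2 ys_def by simp
lemma yr_nn: "nonneg 2 x \<Longrightarrow> 0 \<le> yr x" unfolding nonneg2 yr_def by simp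
lemma col0: "(\<Sum>j\<in>regs 2. x j 0) = ys x" unfolding colsum2 ys_def by simp
lemma col1: "(\<Sum>j\<in>regs 2. x j 1) = yr x" unfolding colsum2 yr_def by simp

lemma mkx_props:
  assumes "0 \<le> s" "0 \<le> r"
  shows "nonneg 2 (mkx al be s r)" "flow_balance 2 b (mkx al be s r)"
    "ys (mkx al be s r) = s" "yr (mkx al be s r) = r"
    "t2 * mkx al be s r 0 1 + t1 * mkx al be s r 1 0 = Phf al be t1 t2 s r"
proof -
  have "al * s \<le> s" by (rule mult_left_le_one_le[OF assms(1) al_nn al_le1])
  moreover have "0 \<le> be * r" using be_nn assms by simp
  ultimately have a1: "0 \<le> s - max 0 (al* s - be*r)" using assms by simp
  have "be * r \<le> r" by (rule mult_left_le_one_le[OF assms(2) be_nn be_le1])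
  moreover have "0 \<le> al * s" using al_nn assms by simp
  ultimately have a2: "0 \<le> r - max 0 (be*r - al* s)" using assms by simp
  show "nonneg 2 (mkx al be s r)" unfolding nonneg2 mkx_def using a1 a2 by simp
  have mm: "max 0 (al* s - be*r) - max 0 (be*r - al* s) = al* s - be*r" by simp
  have qa: "qq 2 b 0 1 = al" and qb: "qq 2 b 1 0 = be" by (simp_all add: al_def be_def)
  show "flow_balance 2 b (mkx al be s r)" unfolding fb2 q00 q11 qa qb mkx_def
    using mm by (simp add: algebra_simps)
  show "ys (mkx al be s r) = s" "yr (mkx al be s r) = r" unfolding ys_def yr_def mkx_def by simp_all
  show "t2 * mkx al be s r 0 1 + t1 * mkx al be s r 1 0 = Phf al be t1 t2 s r"
    unfolding mkx_def Phf_def by simp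
qed

end



context net
begin

lemma cv_obj_eq: "cv_obj 2 b t p 0 R N y =
   (if 0 < p*(1-R) * Wf m0 m1 (ys y) (yr y)
    then ereal (N * ln (p*(1-R) * Wf m0 m1 (ys y) (yr y)) - (Wf m0 m1 (ys y) (yr y) + t2 * y 0 1 + t1 * y 1 0))
    else -\<infinity>)"
  unfolding cv_obj_def wsum_rC wsum_tau by simp

lemma av_to_avopt:
  assumes p: "0 < p" and av: "av_first 2 b t p 0 M x"
  shows "avopt m0 m1 al be t1 t2 B0 B1 M (ys x) (yr x)"
proof -
  have feas: "nonneg 2 x" "flow_balance 2 b x" "wsum 2 (tau_dr 2 b t) x \<le> M"
    "\<forall>i\<in>regs 2. (\<Sum>j\<in>regs 2. x j i) \<le> brow 2 b i"
    using av unfolding av_first_def av_feasible_def by auto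
  have c: "ys x \<le> B0" "yr x \<le> B1" using feas(4) r0 r1 col0 col1 unfolding B0_def B1_def by auto
  have "Wf m0 m1 (ys x) (yr x) + Phf al be t1 t2 (ys x) (yr x) \<le> M"
    using phi_le[OF feas(1,2)] feas(3) unfolding wsum_tau by linarith
  moreover have "Wf m0 m1 s' r' \<le> Wf m0 m1 (ys x) (yr x)"
    if s': "0 \<le> s'" "s' \<le> B0" and r': "0 \<le> r'" "r' \<le> B1"
      and tm: "Wf m0 m1 s' r' + Phf al be t1 t2 s' r' \<le> M" for s' r'
  proof -
    define y where "y = mkx al be s' r'"
    note yp = mkx_props[OF s'(1) r'(1), folded y_def]
    have "av_feasible 2 b t M y" unfolding av_feasible_def
    proof (intro conjI yp(1) yp(2))
      show "\<forall>i\<in>regs 2. (\<Sum>j\<in>regs 2. y j i) \<le> brow 2 b i"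
        unfolding regs2 using col0[of y] col1[of y] yp(3,4) s' r' unfolding B0_def B1_def regs2 by auto
      show "wsum 2 (tau_dr 2 b t) y \<le> M" unfolding wsum_tau using yp(3-5) tm by simp
    qed
    hence "wsum 2 (rA 2 b t p 0) y \<le> wsum 2 (rA 2 b t p 0) x" using av unfolding av_first_def by auto
    hence "p * Wf m0 m1 s' r' \<le> p * Wf m0 m1 (ys x) (yr x)" unfolding wsum_rA using yp(3,4) by simp
    thus ?thesis using p by simp
  qed
  ultimately show ?thesis unfolding avopt_def using ys_nn[OF feas(1)] yr_nn[OF feas(1)] c by auto
qed

lemma cv_to_cvopt:
  assumes p: "0 < p" and R: "R < 1" and cv: "cv_optimal 2 b t p 0 R N bC x"
  shows "cvopt m0 m1 al be t1 t2 N (p*(1-R)) (bC 0) (bC 1) (ys x) (yr x)"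
proof -
  have feas: "nonneg 2 x" "flow_balance 2 b x" "\<forall>i\<in>regs 2. (\<Sum>j\<in>regs 2. x j i) \<le> bC i"
    using cv unfolding cv_optimal_def cv_feasible_def by auto
  have g: "0 < p*(1-R)" using p R by simp
  have c: "ys x \<le> bC 0" "yr x \<le> bC 1" using feas(3) r0 r1 col0 col1 by auto
  have main: "0 < Wf m0 m1 (ys x) (yr x) \<and> Fv m0 m1 al be t1 t2 N (p*(1-R)) s' r' \<le> Fv m0 m1 al be t1 t2 N (p*(1-R)) (ys x) (yr x)"
    if s': "0 \<le> s'" "s' \<le> bC 0" and r': "0 \<le> r'" "r' \<le> bC 1" and Wp: "0 < Wf m0 m1 s' r'" for s' r'
  proof -
    define y where "y = mkx al be s' r'"
    note yp = mkx_props[OF s'(1) r'(1), folded y_def]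
    have "cv_feasible 2 b bC y" unfolding cv_feasible_def
    proof (intro conjI yp(1) yp(2))
      show "\<forall>i\<in>regs 2. (\<Sum>j\<in>regs 2. y j i) \<le> bC i"
        using col0[of y] col1[of y] yp(3,4) s' r' unfolding regs2 by auto
    qed
    hence le: "cv_obj 2 b t p 0 R N y \<le> cv_obj 2 b t p 0 R N x" using cv unfolding cv_optimal_def by auto
    have gW: "0 < p*(1-R) * Wf m0 m1 s' r'" using g Wp by simp
    have oy: "cv_obj 2 b t p 0 R N y = ereal (Fv m0 m1 al be t1 t2 N (p*(1-R)) s' r')"
      unfolding cv_obj_eq Fv_def using yp(3-5) gW by (simp add: algebra_simps)
    have xpos: "0 < p*(1-R) * Wf m0 m1 (ys x) (yr x)"
    proof (rule ccontr)
      assume "\<not> ?thesis"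
      hence "cv_obj 2 b t p 0 R N x = -\<infinity>" unfolding cv_obj_eq by simp
      thus False using le oy by simp
    qed
    hence Wx: "0 < Wf m0 m1 (ys x) (yr x)" using g by (simp add: zero_less_mult_iff)
    have "cv_obj 2 b t p 0 R N x = ereal (N * ln (p*(1-R) * Wf m0 m1 (ys x) (yr x)) - (Wf m0 m1 (ys x) (yr x) + t2 * x 0 1 + t1 * x 1 0))"
      unfolding cv_obj_eq using xpos by simp
    hence "Fv m0 m1 al be t1 t2 N (p*(1-R)) s' r' \<le> N * ln (p*(1-R) * Wf m0 m1 (ys x) (yr x)) - (Wf m0 m1 (ys x) (yr x) + t2 * x 0 1 + t1 * x 1 0)"
      using le oy by simp
    also have "\<dots> \<le> Fv m0 m1 al be t1 t2 N (p*(1-R)) (ys x) (yr x)"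
      unfolding Fv_def using phi_le[OF feas(1,2)] by simp
    finally show ?thesis using Wx by simp
  qed
  show ?thesis unfolding cvopt_def using ys_nn[OF feas(1)] yr_nn[OF feas(1)] c main by blast
qed

lemma cv_exists_net:
  assumes p: "0 < p" and R: "R < 1" and N: "0 < N" and bc: "0 \<le> bC 0" "0 \<le> bC 1"
  shows "\<exists>x. cv_optimal 2 b t p 0 R N bC x"
proof (cases "0 < Wf m0 m1 (bC 0) (bC 1)")
  case True
  have g: "0 < p*(1-R)" using p R by simp
  obtain s r where sr: "cvopt m0 m1 al be t1 t2 N (p*(1-R)) (bC 0) (bC 1) s r"
    using cvopt_exists[OF bc m0_nn m1_nn less_imp_le[OF t1pos] less_imp_le[OF t2pos] g N True] by blast
  have b: "0 \<le> s" "s \<le> bC 0" "0 \<le> r" "r \<le> bC 1" using sr unfolding cvopt_def by auto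
  define x where "x = mkx al be s r"
  note xp = mkx_props[OF b(1) b(3), folded x_def]
  have Wx: "0 < Wf m0 m1 s r" using cvopt_pos[OF sr bc(1) order_refl bc(2) order_refl True] .
  have fx: "cv_feasible 2 b bC x" unfolding cv_feasible_def
    using xp col0[of x] col1[of x] b unfolding regs2 by auto
  have gW: "0 < p*(1-R) * Wf m0 m1 s r" using g Wx by simp
  have "cv_obj 2 b t p 0 R N x = ereal (N * ln (p*(1-R) * Wf m0 m1 s r) - (Wf m0 m1 s r + t2 * x 0 1 + t1 * x 1 0))"
    unfolding cv_obj_eq xp(3) xp(4) using gW by simp
  also have "\<dots> = ereal (Fv m0 m1 al be t1 t2 N (p*(1-R)) s r)" unfolding Fv_def using xp(5) by (simp add: algebra_simps)
  finally have ox: "cv_obj 2 b t p 0 R N x = ereal (Fv m0 m1 al be t1 t2 N (p*(1-R)) s r)" .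
  have "cv_obj 2 b t p 0 R N y \<le> cv_obj 2 b t p 0 R N x" if fy: "cv_feasible 2 b bC y" for y
  proof (cases "0 < p*(1-R) * Wf m0 m1 (ys y) (yr y)")
    case False thus ?thesis unfolding cv_obj_eq[where y=y] by simp
  next
    case True
    have feas: "nonneg 2 y" "flow_balance 2 b y" "\<forall>i\<in>regs 2. (\<Sum>j\<in>regs 2. y j i) \<le> bC i"
      using fy unfolding cv_feasible_def by auto
    have c: "ys y \<le> bC 0" "yr y \<le> bC 1" using feas(3) r0 r1 col0 col1 by auto
    have Wy: "0 < Wf m0 m1 (ys y) (yr y)" using True g by (simp add: zero_less_mult_iff)
    have "N * ln (p*(1-R) * Wf m0 m1 (ys y) (yr y)) - (Wf m0 m1 (ys y) (yr y) + t2 * y 0 1 + t1 * y 1 0)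
          \<le> Fv m0 m1 al be t1 t2 N (p*(1-R)) (ys y) (yr y)"
      unfolding Fv_def using phi_le[OF feas(1,2)] by simp
    also have "\<dots> \<le> Fv m0 m1 al be t1 t2 N (p*(1-R)) s r"
      using sr ys_nn[OF feas(1)] yr_nn[OF feas(1)] c Wy unfolding cvopt_def by blast
    finally show ?thesis unfolding cv_obj_eq[where y=y] ox using True by simp
  qed
  thus ?thesis using fx unfolding cv_optimal_def by blast
next
  case False
  define x where "x = mkx al be 0 0"
  note xp = mkx_props[of 0 0, simplified, folded x_def]
  have fx: "cv_feasible 2 b bC x" unfolding cv_feasible_def
    using xp col0[of x] col1[of x] bc unfolding regs2 by auto
  have "cv_obj 2 b t p 0 R N y \<le> cv_obj 2 b t p 0 R N x" if fy: "cv_feasible 2 b bC y" for y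
  proof -
    have feas: "nonneg 2 y" "\<forall>i\<in>regs 2. (\<Sum>j\<in>regs 2. y j i) \<le> bC i"
      using fy unfolding cv_feasible_def by auto
    have c: "ys y \<le> bC 0" "yr y \<le> bC 1" using feas(2) r0 r1 col0 col1 by auto
    have "Wf m0 m1 (ys y) (yr y) \<le> Wf m0 m1 (bC 0) (bC 1)"
      unfolding Wf_def using c m0_nn m1_nn by (intro add_mono mult_left_mono) auto
    hence "Wf m0 m1 (ys y) (yr y) \<le> 0" using False by simp
    moreover have "0 \<le> p*(1-R)" using p R by simp
    ultimately have "\<not> 0 < p*(1-R) * Wf m0 m1 (ys y) (yr y)" by (simp add: mult_le_0_iff not_less)
    thus ?thesis unfolding cv_obj_eq[where y=y] by simp
  qed
  thus ?thesis using fx unfolding cv_optimal_def by blast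
qed

lemma cv_pi_eq:
  assumes p: "0 < p" and R: "R < 1" and N: "0 < N" and bc: "0 \<le> bC 0" "0 \<le> bC 1"
  shows "\<exists>x. cv_optimal 2 b t p 0 R N bC x \<and> cv_pi 2 b t p 0 R N bC = p*R*Wf m0 m1 (ys x) (yr x)"
proof -
  obtain x0 where "cv_optimal 2 b t p 0 R N bC x0" using cv_exists_net[OF assms] by blast
  hence "\<exists>v. \<exists>x. cv_optimal 2 b t p 0 R N bC x \<and> v = wsum 2 (rC2P 2 b t p R) x" by blast
  from someI_ex[OF this] show ?thesis unfolding cv_pi_def wsum_rC2P by blast
qed

end



context net
begin

lemma part1_elem:
  assumes p: "0 < p" and R: "0 < R" "R < 1" and N: "0 < N" and M: "0 \<le> M"
    and av: "av_first 2 b t p 0 M x" and of: "opt_feasible 2 b t M bC xA"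
  shows "wsum 2 (rA 2 b t p 0) xA + cv_pi 2 b t p 0 R N bC \<le> 5/4 * avfirst_profit 2 b t p 0 R N x"
proof -
  define res where "res = (\<lambda>i. brow 2 b i - (\<Sum>j\<in>regs 2. x j i))"
  have avx: "avopt m0 m1 al be t1 t2 B0 B1 M (ys x) (yr x)" by (rule av_to_avopt[OF p av])
  have res0: "res 0 = B0 - ys x" and res1: "res 1 = B1 - yr x"
    unfolding res_def col0 col1 B0_def B1_def by simp_all
  have resnn: "0 \<le> res 0" "0 \<le> res 1" using avx unfolding res0 res1 avopt_def by auto
  obtain xz where xz: "cv_optimal 2 b t p 0 R N res xz" "cv_pi 2 b t p 0 R N res = p*R*Wf m0 m1 (ys xz) (yr xz)"
    using cv_pi_eq[OF p R(2) N resnn] by blast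
  have cvr: "cvopt m0 m1 al be t1 t2 N (p*(1-R)) (B0 - ys x) (B1 - yr x) (ys xz) (yr xz)"
    using cv_to_cvopt[OF p R(2) xz(1)] unfolding res0 res1 .
  have ofe: "\<forall>i\<in>regs 2. 0 \<le> bC i" "nonneg 2 xA" "\<forall>i\<in>regs 2. (\<Sum>j\<in>regs 2. xA j i) + bC i \<le> brow 2 b i"
    "flow_balance 2 b xA" "wsum 2 (tau_dr 2 b t) xA \<le> M"
    using of unfolding opt_feasible_def by auto
  have bc: "0 \<le> bC 0" "0 \<le> bC 1" "ys xA + bC 0 \<le> B0" "yr xA + bC 1 \<le> B1"
    using ofe(1,3) r0 r1 col0 col1 unfolding B0_def B1_def by auto
  obtain xc where xc: "cv_optimal 2 b t p 0 R N bC xc" "cv_pi 2 b t p 0 R N bC = p*R*Wf m0 m1 (ys xc) (yr xc)"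
    using cv_pi_eq[OF p R(2) N bc(1,2)] by blast
  have cvo: "cvopt m0 m1 al be t1 t2 N (p*(1-R)) (bC 0) (bC 1) (ys xc) (yr xc)"
    by (rule cv_to_cvopt[OF p R(2) xc(1)])
  have ya: "0 \<le> ys xA" "0 \<le> yr xA" "Wf m0 m1 (ys xA) (yr xA) + Phf al be t1 t2 (ys xA) (yr xA) \<le> M"
    using ys_nn[OF ofe(2)] yr_nn[OF ofe(2)] phi_le[OF ofe(2,4)] ofe(5) unfolding wsum_tau by auto
  have g: "0 < p*(1-R)" using p R by simp
  have B: "0 \<le> B0" "0 \<le> B1" using B0pos B1pos by auto
  have main: "Wf m0 m1 (ys xA) (yr xA) + R * Wf m0 m1 (ys xc) (yr xc) \<le>
      5/4 * (Wf m0 m1 (ys x) (yr x) + R * Wf m0 m1 (ys xz) (yr xz))"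
    by (rule core_all[OF m0_nn m1_nn al_nn be_nn m0_pos m1_pos t1pos t2pos N g B M _ _ avx cvr ya bc cvo])
       (use R in auto)
  have "p * (Wf m0 m1 (ys xA) (yr xA) + R * Wf m0 m1 (ys xc) (yr xc)) \<le>
      p * (5/4 * (Wf m0 m1 (ys x) (yr x) + R * Wf m0 m1 (ys xz) (yr xz)))"
    using main p by (intro mult_left_mono) auto
  thus ?thesis unfolding avfirst_profit_def res_def[symmetric] wsum_rA xz(2) xc(2)
    by (simp add: algebra_simps)
qed

end

lemma vn_net: "valid_network 2 b t p c R N M \<Longrightarrow> net b t"
  unfolding valid_network_def by unfold_locales auto

lemma vn_params: "valid_network 2 b t p c R N M \<Longrightarrow> 0 < p \<and> 0 < R \<and> R < 1 \<and> 0 < N \<and> 0 \<le> M"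
  unfolding valid_network_def by auto

lemma opt_set_bound:
  assumes vn: "valid_network 2 b t p 0 R N M" and av: "av_first 2 b t p 0 M x"
  shows "\<forall>v \<in> {wsum 2 (rA 2 b t p 0) xA + cv_pi 2 b t p 0 R N bC | bC xA. opt_feasible 2 b t M bC xA}.
           v \<le> 5/4 * avfirst_profit 2 b t p 0 R N x"
proof -
  interpret net b t by (rule vn_net[OF vn])
  have pr: "0 < p" "0 < R" "R < 1" "0 < N" "0 \<le> M" using vn_params[OF vn] by auto
  show ?thesis using part1_elem[OF pr av] by blast
qed

lemma opt_set_ne:
  assumes vn: "valid_network 2 b t p 0 R N M"
  shows "opt_feasible 2 b t M (\<lambda>_. 0) (\<lambda>_ _. 0)"
proof -
  interpret net b t by (rule vn_net[OF vn])
  have "0 \<le> M" using vn_params[OF vn] by auto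
  thus ?thesis unfolding opt_feasible_def nonneg_def flow_balance_def wsum_def using bpos
    by (auto simp: less_imp_le)
qed

lemma part1:
  assumes vn: "valid_network 2 b t p 0 R N M" and av: "av_first 2 b t p 0 M x"
  shows "4/5 * opt_value 2 b t p 0 R N M \<le> avfirst_profit 2 b t p 0 R N x"
proof -
  let ?S = "{wsum 2 (rA 2 b t p 0) xA + cv_pi 2 b t p 0 R N bC | bC xA. opt_feasible 2 b t M bC xA}"
  have ne: "?S \<noteq> {}" using opt_set_ne[OF vn] by blast
  have "Sup ?S \<le> 5/4 * avfirst_profit 2 b t p 0 R N x"
    using opt_set_bound[OF vn av] ne by (intro cSup_least) auto
  thus ?thesis unfolding opt_value_def by simp
qed

lemma opt_ge:
  assumes vn: "valid_network 2 b t p 0 R N M" and av: "av_first 2 b t p 0 M x"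
    and of: "opt_feasible 2 b t M bC xA"
  shows "wsum 2 (rA 2 b t p 0) xA + cv_pi 2 b t p 0 R N bC \<le> opt_value 2 b t p 0 R N M"
proof -
  let ?S = "{wsum 2 (rA 2 b t p 0) xA + cv_pi 2 b t p 0 R N bC | bC xA. opt_feasible 2 b t M bC xA}"
  have "bdd_above ?S" using opt_set_bound[OF vn av] unfolding bdd_above_def by blast
  moreover have "wsum 2 (rA 2 b t p 0) xA + cv_pi 2 b t p 0 R N bC \<in> ?S" using of by blast
  ultimately show ?thesis unfolding opt_value_def by (meson cSup_upper)
qed



lemma ln_strict: fixes x :: real assumes "0 < x" "x \<noteq> 1" shows "ln x < x - 1"
  using ln_le_minus_one[OF assms(1)] ln_eq_minus_one[OF assms(1)] assms(2) by fastforce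

lemma cvopt_le:
  assumes "cvopt m0 m1 al be t1 t2 N g c0 c1 s r" "0 \<le> s'" "s' \<le> c0" "0 \<le> r'" "r' \<le> c1"
    "0 < Wf m0 m1 s' r'"
  shows "Fv m0 m1 al be t1 t2 N g s' r' \<le> Fv m0 m1 al be t1 t2 N g s r"
  using assms unfolding cvopt_def by blast

lemma ball_regs2: "(\<forall>i\<in>regs 2. P i) \<longleftrightarrow> P 0 \<and> P (1::nat)" by (auto simp: regs2)

lemma Phf1: "Phf 1 1 1 1 s r = max 0 (s - r) + max 0 (r - s)" unfolding Phf_def by simp

lemma ex_cv1:
  assumes g: "0 < g" and opt: "cvopt 1 1 1 1 1 1 1 g (3/4) (1/4) s r"
  shows "Wf 1 1 s r \<le> 1/2"
proof (rule ccontr)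
  assume "\<not> ?thesis"
  hence W: "1/2 < Wf 1 1 s r" by simp
  have b: "0 \<le> s" "s \<le> 3/4" "0 \<le> r" "r \<le> 1/4" using opt unfolding cvopt_def by blast+
  have "0 < Wf 1 1 (1/4) (1/4)" unfolding Wf_def by simp
  hence F: "Fv 1 1 1 1 1 1 1 g (1/4) (1/4) \<le> Fv 1 1 1 1 1 1 1 g s r"
    by (intro cvopt_le[OF opt]) auto
  define w where "w = Wf 1 1 s r"
  have wd: "w = s + r" unfolding w_def Wf_def by simp
  have ph: "s - r \<le> Phf 1 1 1 1 s r" unfolding Phf1 by simp
  have F1: "Fv 1 1 1 1 1 1 1 g (1/4) (1/4) = ln (g/2) - 1/2" unfolding Fv_def Wf_def Phf1 by simp
  have "Fv 1 1 1 1 1 1 1 g s r \<le> ln (g*w) - 2*w + 1/2"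
    unfolding Fv_def w_def[symmetric] using ph wd b by simp
  moreover have "ln (g*w) = ln (g/2) + ln (2*w)" using g W w_def by (simp add: ln_mult ln_div)
  moreover have "ln (2*w) < 2*w - 1" using ln_strict[of "2*w"] W w_def by simp
  ultimately show False using F F1 by linarith
qed

lemma ex_cv2:
  assumes g: "0 < g" and opt: "cvopt 1 1 1 1 1 1 1 g (3/4) (1/2) s r"
  shows "1 \<le> Wf 1 1 s r"
proof (rule ccontr)
  assume "\<not> ?thesis"
  hence W: "Wf 1 1 s r < 1" by simp
  have "0 < Wf 1 1 (1/2) (1/2)" unfolding Wf_def by simp
  hence F: "Fv 1 1 1 1 1 1 1 g (1/2) (1/2) \<le> Fv 1 1 1 1 1 1 1 g s r"
    by (intro cvopt_le[OF opt]) auto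
  have Wp: "0 < Wf 1 1 s r" using cvopt_pos[OF opt, of "1/2" "1/2"] unfolding Wf_def by simp
  have F1: "Fv 1 1 1 1 1 1 1 g (1/2) (1/2) = ln g - 1" unfolding Fv_def Wf_def Phf1 by simp
  have "0 \<le> Phf 1 1 1 1 s r" using Phf_nn by simp
  hence "Fv 1 1 1 1 1 1 1 g s r \<le> ln (g * Wf 1 1 s r) - Wf 1 1 s r" unfolding Fv_def by simp
  moreover have "ln (g * Wf 1 1 s r) = ln g + ln (Wf 1 1 s r)" using g Wp by (simp add: ln_mult)
  moreover have "ln (Wf 1 1 s r) < Wf 1 1 s r - 1" using ln_strict Wp W by simp
  ultimately show False using F F1 by linarith
qed

definition exb :: "nat \<Rightarrow> nat \<Rightarrow> real" where
  "exb i j = (if i = 0 \<and> j = 1 then 1 else if i = 1 \<and> j = 0 then 1/2 else 0)"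
definition ext :: "nat \<Rightarrow> nat \<Rightarrow> real" where
  "ext i j = (if i = j then 0 else 1)"

lemma ex_vn: "0 < R \<Longrightarrow> R < 1 \<Longrightarrow> valid_network 2 exb ext 1 0 R 1 (1/2)"
  unfolding valid_network_def regs2 brow2 exb_def ext_def by auto

lemma example:
  assumes R: "0 < R" "R < 1"
  shows "\<exists>x. av_first 2 exb ext 1 0 (1/2) x \<and> 1/4 + R \<le> opt_value 2 exb ext 1 0 R 1 (1/2) \<and>
           avfirst_profit 2 exb ext 1 0 R 1 x \<le> 1/2 + R/2"
proof -
  have vn: "valid_network 2 exb ext 1 0 R 1 (1/2)" by (rule ex_vn[OF R])
  interpret net exb ext by (rule vn_net[OF vn])
  have B0v: "B0 = 1" unfolding B0_def brow2 exb_def by simp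
  have B1v: "B1 = 1/2" unfolding B1_def brow2 exb_def by simp
  have alv: "al = 1" unfolding al_def qq_def brow2 exb_def by simp
  have bev: "be = 1" unfolding be_def qq_def brow2 exb_def by simp
  have m0v: "m0 = 1" unfolding m0_def meantrip2 qq_def brow2 exb_def ext_def by simp
  have m1v: "m1 = 1" unfolding m1_def meantrip2 qq_def brow2 exb_def ext_def by simp
  have t1v: "t1 = 1" unfolding t1_def ext_def by simp
  have t2v: "t2 = 1" unfolding t2_def ext_def by simp
  have g: "0 < 1*(1-R)" using R by simp
  have br: "brow 2 exb 0 = 1" "brow 2 exb 1 = 1/2" by (simp_all add: brow2 exb_def)
  define x where "x = mkx al be (1/4) (1/4)"
  have q: "(0::real) \<le> 1/4" by simp
  note xp = mkx_props[OF q q, folded x_def]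
  have Wx: "Wf m0 m1 (ys x) (yr x) = 1/2" unfolding xp m0v m1v Wf_def by simp
  have Phx: "Phf al be t1 t2 (1/4) (1/4) = 0" unfolding alv bev Phf_def by simp
  have avx: "av_first 2 exb ext 1 0 (1/2) x"
    unfolding av_first_def
  proof (intro conjI allI impI)
    have c: "\<forall>i\<in>regs 2. (\<Sum>j\<in>regs 2. x j i) \<le> brow 2 exb i"
      unfolding ball_regs2 col0 col1 br xp(3) xp(4) by simp
    have "wsum 2 (tau_dr 2 exb ext) x = 1/2" using wsum_tau[where x=x] xp(5) Wx Phx by linarith
    thus "av_feasible 2 exb ext (1/2) x" unfolding av_feasible_def using xp(1) xp(2) c by simp
    fix y assume fy: "av_feasible 2 exb ext (1/2) y"
    hence nn: "nonneg 2 y" and tm: "wsum 2 (tau_dr 2 exb ext) y \<le> 1/2" unfolding av_feasible_def by auto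
    have "0 \<le> t2 * y 0 1 + t1 * y 1 0" using nn t1pos t2pos unfolding nonneg2 by simp
    hence "Wf m0 m1 (ys y) (yr y) \<le> 1/2" using tm unfolding wsum_tau by linarith
    thus "wsum 2 (rA 2 exb ext 1 0) y \<le> wsum 2 (rA 2 exb ext 1 0) x" unfolding wsum_rA Wx by simp
  qed
  have p1: "(0::real) < 1" by simp
  define res where "res = (\<lambda>i. brow 2 exb i - (\<Sum>j\<in>regs 2. x j i))"
  have res0: "res 0 = 3/4" and res1: "res 1 = 1/4"
    unfolding res_def col0 col1 br xp(3) xp(4) by simp_all
  have rn: "0 \<le> res 0" "0 \<le> res 1" using res0 res1 by simp_all
  obtain xz where xz: "cv_optimal 2 exb ext 1 0 R 1 res xz" "cv_pi 2 exb ext 1 0 R 1 res = 1*R*Wf m0 m1 (ys xz) (yr xz)"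
    using cv_pi_eq[OF p1 R(2) p1 rn] by blast
  have "cvopt m0 m1 al be t1 t2 1 (1*(1-R)) (res 0) (res 1) (ys xz) (yr xz)"
    by (rule cv_to_cvopt[OF p1 R(2) xz(1)])
  hence "cvopt 1 1 1 1 1 1 1 (1*(1-R)) (3/4) (1/4) (ys xz) (yr xz)"
    unfolding m0v m1v alv bev t1v t2v res0 res1 .
  hence Wz: "Wf 1 1 (ys xz) (yr xz) \<le> 1/2" by (rule ex_cv1[OF g])
  have prof: "avfirst_profit 2 exb ext 1 0 R 1 x \<le> 1/2 + R/2"
  proof -
    have "avfirst_profit 2 exb ext 1 0 R 1 x = 1/2 + R * Wf 1 1 (ys xz) (yr xz)"
      unfolding avfirst_profit_def res_def[symmetric] wsum_rA xz(2) Wx unfolding m0v m1v by simp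
    moreover have "R * Wf 1 1 (ys xz) (yr xz) \<le> R * (1/2)" using Wz R by (intro mult_left_mono) auto
    ultimately show ?thesis by simp
  qed
  define bC :: "nat \<Rightarrow> real" where "bC = (\<lambda>i. if i = 0 then 3/4 else 1/2)"
  define xA where "xA = mkx al be (1/4) 0"
  note ap = mkx_props[OF q order_refl, folded xA_def]
  have WA: "Wf m0 m1 (ys xA) (yr xA) = 1/4" unfolding ap m0v m1v Wf_def by simp
  have PhA: "Phf al be t1 t2 (1/4) 0 = 1/4" unfolding alv bev t1v t2v Phf_def by simp
  have c1: "\<forall>i\<in>regs 2. 0 \<le> bC i" unfolding ball_regs2 bC_def by simp
  have c2: "\<forall>i\<in>regs 2. (\<Sum>j\<in>regs 2. xA j i) + bC i \<le> brow 2 exb i"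
    unfolding ball_regs2 col0 col1 br ap(3) ap(4) bC_def by simp
  have "wsum 2 (tau_dr 2 exb ext) xA = 1/2" using wsum_tau[where x=xA] ap(5) WA PhA by linarith
  hence ofA: "opt_feasible 2 exb ext (1/2) bC xA" unfolding opt_feasible_def using c1 c2 ap(1) ap(2) by simp
  have bc: "0 \<le> bC 0" "0 \<le> bC 1" unfolding bC_def by simp_all
  obtain xc where xc: "cv_optimal 2 exb ext 1 0 R 1 bC xc" "cv_pi 2 exb ext 1 0 R 1 bC = 1*R*Wf m0 m1 (ys xc) (yr xc)"
    using cv_pi_eq[OF p1 R(2) p1 bc] by blast
  have "cvopt m0 m1 al be t1 t2 1 (1*(1-R)) (bC 0) (bC 1) (ys xc) (yr xc)"
    by (rule cv_to_cvopt[OF p1 R(2) xc(1)])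
  hence "cvopt 1 1 1 1 1 1 1 (1*(1-R)) (3/4) (1/2) (ys xc) (yr xc)"
    unfolding m0v m1v alv bev t1v t2v bC_def by simp
  hence Wc: "1 \<le> Wf 1 1 (ys xc) (yr xc)" by (rule ex_cv2[OF g])
  have "wsum 2 (rA 2 exb ext 1 0) xA + cv_pi 2 exb ext 1 0 R 1 bC \<le> opt_value 2 exb ext 1 0 R 1 (1/2)"
    by (rule opt_ge[OF vn avx ofA])
  moreover have "wsum 2 (rA 2 exb ext 1 0) xA + cv_pi 2 exb ext 1 0 R 1 bC = 1/4 + R * Wf 1 1 (ys xc) (yr xc)"
    unfolding wsum_rA xc(2) WA unfolding m0v m1v by simp
  moreover have "R * 1 \<le> R * Wf 1 1 (ys xc) (yr xc)" using Wc R by (intro mult_left_mono) auto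
  ultimately have "1/4 + R \<le> opt_value 2 exb ext 1 0 R 1 (1/2)" by linarith
  with avx prof show ?thesis by (intro exI[of _ x] conjI)
qed



lemma final_ineq:
  fixes eps d :: real
  assumes e: "0 < eps" and d: "0 < d" "d \<le> 1/4" "d \<le> eps/4"
  shows "1/2 + (1-d)/2 < (4/5 + eps) * (1/4 + (1-d))"
proof -
  have "eps*d \<le> eps*(1/4)" using e d by (intro mult_left_mono) auto
  moreover have "(4/5 + eps) * (1/4 + (1-d)) = 1 + 5/4*eps - 4/5*d - eps*d" by (simp add: algebra_simps)
  moreover have "(1-d)/2 = 1/2 - d/2" by simp
  moreover have "eps*(1/4) = eps/4" by simp
  ultimately show ?thesis using d e by linarith
qed

theorem proposition7:
  shows "(\<forall>b t p R N M x. valid_network 2 b t p 0 R N M \<and> av_first 2 b t p 0 M x \<longrightarrow>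
            4/5 * opt_value 2 b t p 0 R N M \<le> avfirst_profit 2 b t p 0 R N x) \<and>
         (\<forall>\<epsilon>::real. 0 < \<epsilon> \<longrightarrow>
            (\<exists>b t p R N M x. valid_network 2 b t p 0 R N M \<and> av_first 2 b t p 0 M x \<and>
               0 < opt_value 2 b t p 0 R N M \<and>
               avfirst_profit 2 b t p 0 R N x < (4/5 + \<epsilon>) * opt_value 2 b t p 0 R N M))"
proof (intro conjI allI impI)
  fix b t p R N M x
  assume "valid_network 2 b t p 0 R N M \<and> av_first 2 b t p 0 M x"
  thus "4/5 * opt_value 2 b t p 0 R N M \<le> avfirst_profit 2 b t p 0 R N x" using part1 by blast
next
  fix eps :: real assume e: "0 < eps"
  define d where "d = min eps 1 / 4"
  have d: "0 < d" "d \<le> 1/4" "d \<le> eps/4" unfolding d_def using e by auto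
  define R where "R = 1 - d"
  have R: "0 < R" "R < 1" unfolding R_def using d by auto
  obtain x where x: "av_first 2 exb ext 1 0 (1/2) x" "1/4 + R \<le> opt_value 2 exb ext 1 0 R 1 (1/2)"
    "avfirst_profit 2 exb ext 1 0 R 1 x \<le> 1/2 + R/2"
    using example[OF R] by blast
  have pos: "0 < opt_value 2 exb ext 1 0 R 1 (1/2)" using x(2) R by linarith
  have "1/2 + R/2 < (4/5 + eps) * (1/4 + R)" unfolding R_def using final_ineq[OF e d] by simp
  also have "\<dots> \<le> (4/5 + eps) * opt_value 2 exb ext 1 0 R 1 (1/2)"
    using x(2) e by (intro mult_left_mono) auto
  finally have "avfirst_profit 2 exb ext 1 0 R 1 x < (4/5 + eps) * opt_value 2 exb ext 1 0 R 1 (1/2)"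
    using x(3) by linarith
  thus "\<exists>b t p R N M x. valid_network 2 b t p 0 R N M \<and> av_first 2 b t p 0 M x \<and>
               0 < opt_value 2 b t p 0 R N M \<and>
               avfirst_profit 2 b t p 0 R N x < (4/5 + eps) * opt_value 2 b t p 0 R N M"
    using ex_vn[OF R] x(1) pos by blast
qed


end
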